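(* Let $\mathbb{S}$ be a commutative semigroup with unit $0$, let $\mathcal{A}\subseteq\mathcal{B}(H)$ be a von Neumann algebra, let $T$ be a CP-semigroup over $\mathbb{S}$ on $\mathcal{A}$, and let $(p,K,\mathcal{B},\theta)$ be a dilation of $T$. Then $(p,K,\mathcal{B},\theta)$ is minimal if and only if (1) $\mathcal{B}$ is the von Neumann algebra generated by $\bigcup_{s\in\mathbb{S}}\theta_s(\mathcal{A})$, and (2) $K=\overline{\mathrm{span}}\{\theta_{s_1}(a_1)\cdots\theta_{s_k}(a_k)h : k\in\mathbb{N},\ h\in H,\ a_i\in\mathcal{A},\ s_i\in\mathbb{S},\ 1\le i\le k\}$.
   Context: A CP-semigroup over $\mathbb{S}$ on $\mathcal{A}$ is a family $T=\{T_s\}_{s\in\mathbb{S}}$ of normal contractive completely positive maps on $\mathcal{A}$ with $T_0=\mathrm{id}_{\mathcal{A}}$ and $T_s\circ T_t=T_{s+t}$. An E-semigroup is a CP-semigroup consisting of $*$-endomorphisms. A dilation of $T$ is a quadruple $(p,K,\mathcal{B},\theta)$ where $K\supseteq H$ is a Hilbert space, $\mathcal{B}\subseteq\mathcal{B}(K)$ is a von Neumann algebra, $p\in\mathcal{B}$ is the orthogonal projection $K\to H$, $\mathcal{A}=p\mathcal{B}p$, and $\theta=\{\theta_s\}_{s\in\mathbb{S}}$ is an E-semigroup on $\mathcal{B}$ with $T_s(a)=p\theta_s(a)p$ for all $a\in\mathcal{A}$, $s\in\mathbb{S}$. The dilation is minimal if the von Neumann algebra generated by $\bigcup_{s}\theta_s(\mathcal{A})$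 is $\mathcal{B}$ and the central carrier of $p$ in $\mathcal{B}$ (the smallest projection $q\in\mathcal{B}\cap\mathcal{B}'$ with $qp=p$) equals $1_{\mathcal{B}}$. *)

theory Defs
  imports "HOL-Analysis.Analysis" "HOL-Library.Function_Algebras"
begin

text \<open>Concrete model of Hilbert spaces: every complex Hilbert space is unitarily
equivalent to a closed subspace of the sequence space l2 over some index type.\<close>

type_synonym 'i vec = "'i \<Rightarrow> complex"
type_synonym 'i op = "'i vec \<Rightarrow> 'i vec"

definition ell2 :: "'i vec set" where
  "ell2 = {x. (\<lambda>i. (cmod (x i))^2) summable_on UNIV}"

definition cinner :: "'i vec \<Rightarrow> 'i vec \<Rightarrow> complex" where
  "cinner x y = infsum (\<lambda>i. cnj (x i) * y i) UNIV"

definition vnorm :: "'i vec \<Rightarrow> real" where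
  "vnorm x = sqrt (infsum (\<lambda>i. (cmod (x i))^2) UNIV)"

definition csmul :: "complex \<Rightarrow> 'i vec \<Rightarrow> 'i vec" where
  "csmul c x = (\<lambda>i. c * x i)"

definition l2closure :: "'i vec set \<Rightarrow> 'i vec set" where
  "l2closure X = {x \<in> ell2. \<forall>e>0. \<exists>y\<in>X. vnorm (x - y) < e}"

definition lin_span :: "'i vec set \<Rightarrow> 'i vec set" where
  "lin_span X = {x. \<exists>(n::nat) c v. (\<forall>k<n. v k \<in> X) \<and> x = (\<Sum>k<n. csmul (c k) (v k))}"

definition closed_subspace :: "'i vec set \<Rightarrow> bool" where
  "closed_subspace S \<longleftrightarrow> S \<subseteq> ell2 \<and> 0 \<in> S \<and> (\<forall>x\<in>S. \<forall>y\<in>S. x + y \<in> S)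
     \<and> (\<forall>c. \<forall>x\<in>S. csmul c x \<in> S) \<and> l2closure S \<subseteq> S"

definition bop :: "'i vec set \<Rightarrow> 'i op \<Rightarrow> bool" where
  "bop S a \<longleftrightarrow> (\<forall>x\<in>S. a x \<in> S) \<and> (\<forall>x\<in>S. \<forall>y\<in>S. a (x + y) = a x + a y)
     \<and> (\<forall>c. \<forall>x\<in>S. a (csmul c x) = csmul c (a x))
     \<and> (\<exists>C. \<forall>x\<in>S. vnorm (a x) \<le> C * vnorm x) \<and> (\<forall>x. x \<notin> S \<longrightarrow> a x = 0)"

definition idop :: "'i vec set \<Rightarrow> 'i op" where
  "idop S x = (if x \<in> S then x else 0)"

definition opnorm :: "'i vec set \<Rightarrow> 'i op \<Rightarrow> real" where
  "opnorm S a = Sup {vnorm (a x) | x. x \<in> S \<and> vnorm x \<le> 1}"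

definition opsmul :: "complex \<Rightarrow> 'i op \<Rightarrow> 'i op" where
  "opsmul c a = (\<lambda>x. csmul c (a x))"

definition is_adj :: "'i vec set \<Rightarrow> 'i op \<Rightarrow> 'i op \<Rightarrow> bool" where
  "is_adj S a b \<longleftrightarrow> bop S a \<and> bop S b \<and> (\<forall>x\<in>S. \<forall>y\<in>S. cinner (a x) y = cinner x (b y))"

definition op_commutant :: "'i vec set \<Rightarrow> 'i op set \<Rightarrow> 'i op set" where
  "op_commutant S M = {b. bop S b \<and> (\<forall>a\<in>M. b \<circ> a = a \<circ> b)}"

definition vN_algebra :: "'i vec set \<Rightarrow> 'i op set \<Rightarrow> bool" where
  "vN_algebra S M \<longleftrightarrow> (\<forall>a\<in>M. bop S a) \<and> (\<forall>a\<in>M. \<exists>b\<in>M. is_adj S a b)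
     \<and> op_commutant S (op_commutant S M) = M"

definition gen_vN :: "'i vec set \<Rightarrow> 'i op set \<Rightarrow> 'i op set" where
  "gen_vN S X = \<Inter>{M. vN_algebra S M \<and> X \<subseteq> M}"

definition is_projection :: "'i vec set \<Rightarrow> 'i op \<Rightarrow> bool" where
  "is_projection S q \<longleftrightarrow> bop S q \<and> q \<circ> q = q \<and> is_adj S q q"

definition central_carrier :: "'i vec set \<Rightarrow> 'i op set \<Rightarrow> 'i op \<Rightarrow> 'i op \<Rightarrow> bool" where
  "central_carrier S B p q \<longleftrightarrow>
     q \<in> B \<inter> op_commutant S B \<and> is_projection S q \<and> q \<circ> p = p \<and>
     (\<forall>q'. q' \<in> B \<inter> op_commutant S B \<and> is_projection S q' \<and> q' \<circ> p = p \<longrightarrow> q' \<circ> q = q)"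

definition pos_matrix :: "'i vec set \<Rightarrow> nat \<Rightarrow> (nat \<Rightarrow> nat \<Rightarrow> 'i op) \<Rightarrow> bool" where
  "pos_matrix S n a \<longleftrightarrow> (\<forall>h. (\<forall>i<n. h i \<in> S) \<longrightarrow>
     (let z = (\<Sum>i<n. \<Sum>j<n. cinner (h i) (a i j (h j))) in Im z = 0 \<and> Re z \<ge> 0))"

definition completely_positive :: "'i vec set \<Rightarrow> 'i op set \<Rightarrow> ('i op \<Rightarrow> 'i op) \<Rightarrow> bool" where
  "completely_positive S A T \<longleftrightarrow> (\<forall>n a. (\<forall>i<n. \<forall>j<n. a i j \<in> A) \<longrightarrow> pos_matrix S n a
      \<longrightarrow> pos_matrix S n (\<lambda>i j. T (a i j)))"

definition sw_functional :: "'i vec set \<Rightarrow> ('i op \<Rightarrow> complex) \<Rightarrow> bool" where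
  "sw_functional S \<omega> \<longleftrightarrow> (\<exists>\<xi> \<eta>. (\<forall>n. \<xi> n \<in> S \<and> \<eta> n \<in> S)
      \<and> summable (\<lambda>n. (vnorm (\<xi> n))^2) \<and> summable (\<lambda>n. (vnorm (\<eta> n))^2)
      \<and> (\<forall>a. \<omega> a = (\<Sum>n. cinner (\<xi> n) (a (\<eta> n)))))"

text \<open>Normal = continuous for the sigma-weak topology (on A), phrased via filter convergence.\<close>
definition normal_map :: "'i vec set \<Rightarrow> 'i op set \<Rightarrow> ('i op \<Rightarrow> 'i op) \<Rightarrow> bool" where
  "normal_map S A T \<longleftrightarrow> (\<forall>a\<in>A. \<forall>F. F \<le> principal A \<longrightarrow>
      (\<forall>\<omega>. sw_functional S \<omega> \<longrightarrow> (\<omega> \<longlongrightarrow> \<omega> a) F) \<longrightarrow>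
      (\<forall>\<omega>. sw_functional S \<omega> \<longrightarrow> ((\<lambda>x. \<omega> (T x)) \<longlongrightarrow> \<omega> (T a)) F))"

definition ncp_map :: "'i vec set \<Rightarrow> 'i op set \<Rightarrow> ('i op \<Rightarrow> 'i op) \<Rightarrow> bool" where
  "ncp_map S A T \<longleftrightarrow> (\<forall>a\<in>A. T a \<in> A)
     \<and> (\<forall>a\<in>A. \<forall>b\<in>A. T (a + b) = T a + T b)
     \<and> (\<forall>c. \<forall>a\<in>A. T (opsmul c a) = opsmul c (T a))
     \<and> (\<forall>a\<in>A. opnorm S (T a) \<le> opnorm S a)
     \<and> completely_positive S A T \<and> normal_map S A T"

definition cp_semigroup :: "'i vec set \<Rightarrow> 'i op set \<Rightarrow> ('s::comm_monoid_add \<Rightarrow> 'i op \<Rightarrow> 'i op) \<Rightarrow> bool" where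
  "cp_semigroup S A T \<longleftrightarrow> (\<forall>s. ncp_map S A (T s)) \<and> (\<forall>a\<in>A. T 0 a = a)
     \<and> (\<forall>s t. \<forall>a\<in>A. T s (T t a) = T (s + t) a)"

definition e_semigroup :: "'i vec set \<Rightarrow> 'i op set \<Rightarrow> ('s::comm_monoid_add \<Rightarrow> 'i op \<Rightarrow> 'i op) \<Rightarrow> bool" where
  "e_semigroup S B \<theta> \<longleftrightarrow> cp_semigroup S B \<theta> \<and>
     (\<forall>s. (\<forall>a\<in>B. \<forall>b\<in>B. \<theta> s (a \<circ> b) = \<theta> s a \<circ> \<theta> s b) \<and>
          (\<forall>a\<in>B. \<forall>b. is_adj S a b \<longrightarrow> is_adj S (\<theta> s a) (\<theta> s b)))"

text \<open>Identification of operators on H with the corner p B(K) p: an operator a on H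
(vanishing off H) corresponds to a \<circ> p on K; an operator b on K compresses to
p b p restricted to H.\<close>
definition restr_op :: "'i vec set \<Rightarrow> 'i op \<Rightarrow> 'i op" where
  "restr_op H f x = (if x \<in> H then f x else 0)"

definition compr :: "'i vec set \<Rightarrow> 'i op \<Rightarrow> 'i op \<Rightarrow> 'i op" where
  "compr H p b = restr_op H (p \<circ> b \<circ> p)"

definition ext_op :: "'i op \<Rightarrow> 'i op \<Rightarrow> 'i op" where
  "ext_op p a = a \<circ> p"

definition dilation ::
  "'i vec set \<Rightarrow> 'i op set \<Rightarrow> ('s::comm_monoid_add \<Rightarrow> 'i op \<Rightarrow> 'i op)
   \<Rightarrow> 'i op \<Rightarrow> 'i vec set \<Rightarrow> 'i op set \<Rightarrow> ('s \<Rightarrow> 'i op \<Rightarrow> 'i op) \<Rightarrow> bool" where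
  "dilation H A T p K B \<theta> \<longleftrightarrow> closed_subspace K \<and> H \<subseteq> K \<and> vN_algebra K B \<and>
     p \<in> B \<and> is_projection K p \<and> p ` K = H \<and>
     A = compr H p ` B \<and> e_semigroup K B \<theta> \<and>
     (\<forall>s. \<forall>a\<in>A. T s a = compr H p (\<theta> s (ext_op p a)))"

definition minimal_dilation ::
  "'i vec set \<Rightarrow> 'i op set \<Rightarrow> 'i op \<Rightarrow> 'i vec set \<Rightarrow> 'i op set \<Rightarrow> ('s \<Rightarrow> 'i op \<Rightarrow> 'i op) \<Rightarrow> bool" where
  "minimal_dilation H A p K B \<theta> \<longleftrightarrow>
     B = gen_vN K (\<Union>s. \<theta> s ` ext_op p ` A) \<and> central_carrier K B p (idop K)"

definition prodops :: "'i op list \<Rightarrow> 'i op" where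
  "prodops xs = foldr (\<circ>) xs id"

end

theory Submission
  imports Defs
begin

lemma sq_ineq: "(cmod (a + b))^2 \<le> 2*(cmod a)^2 + 2*(cmod b)^2"
proof -
  have "cmod (a+b) \<le> cmod a + cmod b" by (rule norm_triangle_ineq)
  hence "(cmod (a+b))^2 \<le> (cmod a + cmod b)^2" by (simp add: power_mono)
  also have "\<dots> \<le> 2*(cmod a)^2 + 2*(cmod b)^2"
    by (smt (verit) power2_sum sum_squares_bound)
  finally show ?thesis .
qed

lemma ab_le_sq: fixes a b :: real assumes "a \<ge> 0" "b \<ge> 0" shows "a*b \<le> a^2 + b^2"
proof -
  have "0 \<le> (a-b)^2" by simp
  hence "2*a*b \<le> a^2+b^2" by (simp add: power2_diff)
  moreover have "a*b \<ge> 0" using assms by simp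
  ultimately show ?thesis by linarith
qed

lemma ell2_iff: "x \<in> ell2 \<longleftrightarrow> (\<lambda>i. (cmod (x i))^2) summable_on UNIV"
  by (simp add: ell2_def)

lemma ell2_add: "x \<in> ell2 \<Longrightarrow> y \<in> ell2 \<Longrightarrow> x + y \<in> ell2"
  unfolding ell2_iff
  apply (rule summable_on_comparison_test[where f="\<lambda>i. 2*(cmod (x i))^2 + 2*(cmod (y i))^2"])
  by (auto intro!: summable_on_add summable_on_cmult_right simp: sq_ineq)

lemma ell2_csmul: "x \<in> ell2 \<Longrightarrow> csmul c x \<in> ell2"
  unfolding ell2_iff csmul_def
  by (auto simp: norm_mult power_mult_distrib intro!: summable_on_cmult_right)

lemma ell2_uminus: "x \<in> ell2 \<Longrightarrow> - x \<in> ell2"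
  unfolding ell2_iff by simp

lemma ell2_diff: "x \<in> ell2 \<Longrightarrow> y \<in> ell2 \<Longrightarrow> x - y \<in> ell2"
proof -
  assume a: "x \<in> ell2" "y \<in> ell2"
  have "x - y = x + (-y)" by simp
  thus ?thesis using ell2_add[OF a(1) ell2_uminus[OF a(2)]] by simp
qed

lemma ell2_zero[simp]: "0 \<in> ell2"
  unfolding ell2_iff by simp

lemma inner_summable:
  assumes "x \<in> ell2" "y \<in> ell2"
  shows "(\<lambda>i. cnj (x i) * y i) summable_on UNIV"
proof -
  have s: "(\<lambda>i. (cmod (x i))^2 + (cmod (y i))^2) summable_on UNIV"
      using assms by (auto simp: ell2_iff intro!: summable_on_add)
  have "\<And>i. norm (cnj (x i) * y i) \<le> (cmod (x i))^2 + (cmod (y i))^2"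
      by (simp add: norm_mult ab_le_sq)
  hence "(\<lambda>i. norm (cnj (x i) * y i)) summable_on UNIV"
    by (rule summable_on_comparison_test[OF s]) auto
  thus ?thesis using summable_on_iff_abs_summable_on_complex by blast
qed

lemma cinner_add_left: "x \<in> ell2 \<Longrightarrow> y \<in> ell2 \<Longrightarrow> z \<in> ell2 \<Longrightarrow>
   cinner (x + y) z = cinner x z + cinner y z"
  unfolding cinner_def
  by (simp add: distrib_right infsum_add inner_summable)

lemma cinner_add_right: "x \<in> ell2 \<Longrightarrow> y \<in> ell2 \<Longrightarrow> z \<in> ell2 \<Longrightarrow>
   cinner z (x + y) = cinner z x + cinner z y"
  unfolding cinner_def
  by (simp add: distrib_left infsum_add inner_summable)

lemma cinner_smul_left: "cinner (csmul c x) y = cnj c * cinner x y"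
  unfolding cinner_def csmul_def
  by (simp add: mult.assoc infsum_cmult_right'[symmetric])

lemma cinner_smul_right: "cinner y (csmul c x) = c * cinner y x"
  unfolding cinner_def csmul_def
  by (simp add: mult.left_commute infsum_cmult_right'[symmetric])

lemma cinner_commute: "cinner y x = cnj (cinner x y)"
  unfolding cinner_def
  by (simp add: infsum_cnj[symmetric] mult.commute del: infsum_cnj)


lemma vnorm_ge0[simp]: "vnorm x \<ge> 0"
  unfolding vnorm_def by (simp add: infsum_nonneg)

lemma vnorm_sq: "(vnorm x)^2 = infsum (\<lambda>i. (cmod (x i))^2) UNIV"
  unfolding vnorm_def by (simp add: infsum_nonneg)

lemma cinner_self: assumes "x \<in> ell2" shows "cinner x x = complex_of_real ((vnorm x)^2)"
proof -
  have e: "\<And>i. cnj (x i) * x i = complex_of_real ((cmod (x i))^2)"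
    by (metis complex_norm_square mult.commute)
  have "((\<lambda>i. (cmod (x i))^2) has_sum infsum (\<lambda>i. (cmod (x i))^2) UNIV) UNIV"
    using assms by (simp add: ell2_iff)
  hence "((\<lambda>i. complex_of_real ((cmod (x i))^2)) has_sum complex_of_real (infsum (\<lambda>i. (cmod (x i))^2) UNIV)) UNIV"
    by (rule has_sum_of_real)
  thus ?thesis unfolding cinner_def e vnorm_sq by (rule infsumI)
qed

lemma Re_cinner_self: "x \<in> ell2 \<Longrightarrow> Re (cinner x x) = (vnorm x)^2"
  by (simp add: cinner_self)

lemma vnorm_eq0: assumes "x \<in> ell2" "vnorm x = 0" shows "x = 0"
proof
  fix i
  have s: "(\<lambda>i. (cmod (x i))^2) summable_on UNIV" using assms by (simp add: ell2_iff)
  have "infsum (\<lambda>i. (cmod (x i))^2) UNIV \<le> 0" using assms(2) vnorm_sq[of x] by simp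
  hence "(cmod (x i))^2 = 0" by (rule nonneg_infsum_le_0D[OF _ s]) auto
  thus "x i = 0 i" by simp
qed

lemma vnorm_zero[simp]: "vnorm 0 = 0"
  unfolding vnorm_def by simp

lemma cinner_zero_left[simp]: "cinner 0 y = 0"
  unfolding cinner_def by simp
lemma cinner_zero_right[simp]: "cinner y 0 = 0"
  unfolding cinner_def by simp

lemma csmul_minus1: "csmul (-1) x = - x"
  unfolding csmul_def by auto

lemma cinner_uminus_left: "cinner (- x) y = - cinner x y"
  using cinner_smul_left[of "-1" x y] by (simp add: csmul_minus1)
lemma cinner_uminus_right: "cinner y (- x) = - cinner y x"
  using cinner_smul_right[of y "-1" x] by (simp add: csmul_minus1)

lemma cinner_diff_left: "x \<in> ell2 \<Longrightarrow> y \<in> ell2 \<Longrightarrow> z \<in> ell2 \<Longrightarrow>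
   cinner (x - y) z = cinner x z - cinner y z"
  using cinner_add_left[of x "-y" z] ell2_uminus[of y] by (simp add: cinner_uminus_left)
lemma cinner_diff_right: "x \<in> ell2 \<Longrightarrow> y \<in> ell2 \<Longrightarrow> z \<in> ell2 \<Longrightarrow>
   cinner z (x - y) = cinner z x - cinner z y"
  using cinner_add_right[of x "-y" z] ell2_uminus[of y] by (simp add: cinner_uminus_right)

lemma vnorm_csmul: "vnorm (csmul c x) = cmod c * vnorm x"
proof -
  have "(vnorm (csmul c x))^2 = infsum (\<lambda>i. (cmod c)^2 * (cmod (x i))^2) UNIV"
    unfolding vnorm_sq csmul_def by (simp add: norm_mult power_mult_distrib)
  also have "\<dots> = (cmod c)^2 * (vnorm x)^2"
    by (simp add: vnorm_sq infsum_cmult_right')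
  also have "\<dots> = (cmod c * vnorm x)^2" by (simp add: power_mult_distrib)
  finally show ?thesis by (simp add: power2_eq_iff_nonneg)
qed

lemma vnorm_uminus[simp]: "vnorm (- x) = vnorm x"
  unfolding vnorm_def by simp

lemma vnorm_minus_commute: "vnorm (x - y) = vnorm (y - x)"
  by (metis minus_diff_eq vnorm_uminus)

lemma norm_add_sq: assumes "x \<in> ell2" "y \<in> ell2"
  shows "(vnorm (x + y))^2 = (vnorm x)^2 + 2 * Re (cinner x y) + (vnorm y)^2"
proof -
  have xy: "x + y \<in> ell2" using assms ell2_add by blast
  have "cinner (x+y) (x+y) = cinner x x + cinner x y + (cinner y x + cinner y y)"
    using assms xy by (simp add: cinner_add_left cinner_add_right)
  hence "Re (cinner (x+y) (x+y)) = Re (cinner x x) + Re (cinner x y) + Re (cinner y x) + Re (cinner y y)"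
    by simp
  moreover have "Re (cinner y x) = Re (cinner x y)" by (simp add: cinner_commute[of y x])
  ultimately show ?thesis using assms xy by (simp add: Re_cinner_self)
qed

lemma cauchy_schwarz: assumes "x \<in> ell2" "y \<in> ell2"
  shows "cmod (cinner x y) \<le> vnorm x * vnorm y"
proof (cases "vnorm y = 0")
  case True
  hence "y = 0" using vnorm_eq0 assms by blast
  thus ?thesis by simp
next
  case False
  define n where "n = (vnorm y)^2"
  have n0: "n > 0" using False by (simp add: n_def)
  define c where "c = cinner y x"
  define t where "t = c / complex_of_real n"
  have cxy: "cinner x y = cnj c" by (simp add: c_def cinner_commute[of x y])
  have ty: "csmul (-t) y \<in> ell2" using assms ell2_csmul by blast
  have "0 \<le> (vnorm (x + csmul (-t) y))^2" by simp
  also have "\<dots> = (vnorm x)^2 + 2 * Re (cinner x (csmul (-t) y)) + (vnorm (csmul (-t) y))^2"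
    using norm_add_sq[OF assms(1) ty] .
  also have "cinner x (csmul (-t) y) = - (t * cnj c)"
    by (simp add: cinner_smul_right cxy)
  also have "t * cnj c = complex_of_real ((cmod c)^2 / n)"
  proof -
    have "c * cnj c = complex_of_real ((cmod c)^2)" by (metis complex_norm_square)
    thus ?thesis unfolding t_def by (simp add: of_real_divide)
  qed
  also have "(vnorm (csmul (-t) y))^2 = (cmod c)^2 / n"
  proof -
    have "(vnorm (csmul (-t) y))^2 = (cmod t)^2 * n" by (simp add: vnorm_csmul power_mult_distrib n_def)
    also have "(cmod t)^2 = (cmod c)^2 / n^2" using n0 by (simp add: t_def norm_divide power_divide)
    finally show ?thesis using n0 by (simp add: power2_eq_square)
  qed
  finally have "0 \<le> (vnorm x)^2 - (cmod c)^2 / n" by simp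
  hence "(cmod c)^2 \<le> (vnorm x)^2 * n" using n0 by (simp add: field_simps)
  hence "(cmod c)^2 \<le> (vnorm x * vnorm y)^2" by (simp add: n_def power_mult_distrib)
  hence "cmod c \<le> vnorm x * vnorm y"
    by (rule power2_le_imp_le) simp
  thus ?thesis by (simp add: cxy)
qed

lemma vnorm_triangle: assumes "x \<in> ell2" "y \<in> ell2"
  shows "vnorm (x + y) \<le> vnorm x + vnorm y"
proof -
  have "Re (cinner x y) \<le> vnorm x * vnorm y"
    using cauchy_schwarz[OF assms] complex_Re_le_cmod order_trans by blast
  hence "(vnorm (x + y))^2 \<le> (vnorm x + vnorm y)^2"
    using norm_add_sq[OF assms] by (simp add: power2_sum)
  thus ?thesis by (rule power2_le_imp_le) simp
qed

lemma vnorm_triangle_diff: assumes "x \<in> ell2" "y \<in> ell2" "z \<in> ell2"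
  shows "vnorm (x - z) \<le> vnorm (x - y) + vnorm (y - z)"
proof -
  have "x - z = (x - y) + (y - z)" by simp
  thus ?thesis using vnorm_triangle[of "x - y" "y - z"] assms ell2_diff by metis
qed

lemma cinner_eq_imp_eq: assumes "u \<in> ell2" "w \<in> ell2" "cinner (u - w) u = cinner (u - w) w"
  shows "u = w"
proof -
  have d: "u - w \<in> ell2" using assms ell2_diff by blast
  have "cinner (u - w) (u - w) = 0" using assms d by (simp add: cinner_diff_right)
  hence "vnorm (u - w) = 0" using cinner_self[OF d] by simp
  thus ?thesis using vnorm_eq0[OF d] by simp
qed


lemma single_le: assumes "x \<in> ell2" shows "cmod (x i) \<le> vnorm x"
proof -
  have "sum (\<lambda>i. (cmod (x i))^2) {i} \<le> infsum (\<lambda>i. (cmod (x i))^2) UNIV"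
    using assms by (intro finite_sum_le_infsum) (auto simp: ell2_iff)
  hence "(cmod (x i))^2 \<le> (vnorm x)^2" by (simp add: vnorm_sq)
  thus ?thesis by (rule power2_le_imp_le) simp
qed

lemma ell2_complete:
  fixes X :: "nat \<Rightarrow> 'i vec"
  assumes X: "\<And>n. X n \<in> ell2"
    and C: "\<And>e. e > 0 \<Longrightarrow> \<exists>N. \<forall>m\<ge>N. \<forall>n\<ge>N. vnorm (X m - X n) < e"
  shows "\<exists>x\<in>ell2. \<forall>e>0. \<exists>N. \<forall>n\<ge>N. vnorm (X n - x) < e"
proof -
  have cau: "Cauchy (\<lambda>n. X n i)" for i
  proof (rule CauchyI)
    fix e :: real assume "e > 0"
    then obtain N where N: "\<forall>m\<ge>N. \<forall>n\<ge>N. vnorm (X m - X n) < e" using C by blast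
    show "\<exists>M. \<forall>m\<ge>M. \<forall>n\<ge>M. norm (X m i - X n i) < e"
    proof (intro exI allI impI)
      fix m n assume "N \<le> m" "N \<le> n"
      have "norm (X m i - X n i) = cmod ((X m - X n) i)" by simp
      also have "\<dots> \<le> vnorm (X m - X n)" using single_le[OF ell2_diff[OF X X]] .
      also have "\<dots> < e" using N \<open>N \<le> m\<close> \<open>N \<le> n\<close> by blast
      finally show "norm (X m i - X n i) < e" .
    qed
  qed
  define x where "x i = lim (\<lambda>n. X n i)" for i
  have lim: "(\<lambda>n. X n i) \<longlonglongrightarrow> x i" for i
    unfolding x_def using convergent_LIMSEQ_iff Cauchy_convergent[OF cau] by blast
  have key: "\<exists>N. \<forall>n\<ge>N. X n - x \<in> ell2 \<and> vnorm (X n - x) < e" if "e > 0" for e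
  proof -
    obtain N where N: "\<forall>m\<ge>N. \<forall>n\<ge>N. vnorm (X m - X n) < e/2" using C[of "e/2"] \<open>e>0\<close> by auto
    have "X n - x \<in> ell2 \<and> vnorm (X n - x) < e" if n: "n \<ge> N" for n
    proof -
      have fs: "sum (\<lambda>i. (cmod ((X n - x) i))^2) F \<le> (e/2)^2" if F: "finite F" for F
      proof -
        have t: "(\<lambda>m. sum (\<lambda>i. (cmod (X n i - X m i))^2) F) \<longlonglongrightarrow> sum (\<lambda>i. (cmod (X n i - x i))^2) F"
          by (intro tendsto_sum tendsto_power tendsto_norm tendsto_diff tendsto_const lim)
        have "\<forall>m\<ge>N. sum (\<lambda>i. (cmod (X n i - X m i))^2) F \<le> (e/2)^2"
        proof (intro allI impI)
          fix m assume m: "m \<ge> N"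
          have d: "X n - X m \<in> ell2" using X ell2_diff by blast
          have "sum (\<lambda>i. (cmod ((X n - X m) i))^2) F \<le> infsum (\<lambda>i. (cmod ((X n - X m) i))^2) UNIV"
            using d F by (intro finite_sum_le_infsum) (auto simp: ell2_iff)
          also have "\<dots> = (vnorm (X n - X m))^2" by (simp add: vnorm_sq)
          also have "\<dots> \<le> (e/2)^2" using N m n
            by (intro power_mono) (auto intro: less_imp_le)
          finally show "sum (\<lambda>i. (cmod (X n i - X m i))^2) F \<le> (e/2)^2" by simp
        qed
        hence "sum (\<lambda>i. (cmod (X n i - x i))^2) F \<le> (e/2)^2"
          using LIMSEQ_le_const2[OF t] by blast
        thus ?thesis by simp
      qed
      have sm: "(\<lambda>i. (cmod ((X n - x) i))^2) summable_on UNIV"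
        by (rule nonneg_bdd_above_summable_on) (use fs in \<open>auto intro!: bdd_aboveI2[where M="(e/2)^2"]\<close>)
      hence "infsum (\<lambda>i. (cmod ((X n - x) i))^2) UNIV \<le> (e/2)^2"
        by (rule infsum_le_finite_sums) (use fs in auto)
      hence "(vnorm (X n - x))^2 \<le> (e/2)^2" by (simp add: vnorm_sq)
      hence "vnorm (X n - x) \<le> e/2" by (rule power2_le_imp_le) (use \<open>e>0\<close> in simp)
      thus ?thesis using sm \<open>e>0\<close> by (simp add: ell2_iff)
    qed
    thus ?thesis by blast
  qed
  obtain N where "\<forall>n\<ge>N. X n - x \<in> ell2 \<and> vnorm (X n - x) < 1" using key[of 1] by auto
  hence "X N - x \<in> ell2" by blast
  hence "X N - (X N - x) \<in> ell2" using X ell2_diff by blast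
  hence "x \<in> ell2" by simp
  thus ?thesis using key by blast
qed

lemma parallelogram: assumes "a \<in> ell2" "b \<in> ell2"
  shows "(vnorm (a - b))^2 = 2*(vnorm a)^2 + 2*(vnorm b)^2 - (vnorm (a + b))^2"
proof -
  have "a - b = a + (-b)" by simp
  hence "(vnorm (a - b))^2 = (vnorm a)^2 + 2 * Re (cinner a (-b)) + (vnorm (-b))^2"
    using norm_add_sq[OF assms(1) ell2_uminus[OF assms(2)]] by simp
  thus ?thesis using norm_add_sq[OF assms] by (simp add: cinner_uminus_right)
qed

lemma minimizer_exists:
  assumes cs: "closed_subspace M" and x: "x \<in> ell2"
  shows "\<exists>m\<in>M. \<forall>y\<in>M. vnorm (x - m) \<le> vnorm (x - y)"
proof -
  have M: "M \<subseteq> ell2" "0 \<in> M" "\<And>a b. a \<in> M \<Longrightarrow> b \<in> M \<Longrightarrow> a + b \<in> M"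
    "\<And>c a. a \<in> M \<Longrightarrow> csmul c a \<in> M" "l2closure M \<subseteq> M"
    using cs unfolding closed_subspace_def by auto
  define D where "D = (\<lambda>m. vnorm (x - m)) ` M"
  define \<delta> where "\<delta> = Inf D"
  have Dne: "D \<noteq> {}" using M(2) by (auto simp: D_def)
  have Dbdd: "bdd_below D" by (auto simp: D_def intro!: bdd_belowI[of _ 0])
  have low: "\<delta> \<le> vnorm (x - y)" if "y \<in> M" for y
    unfolding \<delta>_def D_def using that Dbdd by (intro cInf_lower) (auto simp: D_def)
  have d0: "\<delta> \<ge> 0" unfolding \<delta>_def by (rule cInf_greatest[OF Dne]) (auto simp: D_def)
  have "\<forall>n. \<exists>m. m \<in> M \<and> vnorm (x - m) < \<delta> + 1 / real (Suc n)"
  proof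
    fix n
    have "Inf D < \<delta> + 1 / real (Suc n)" unfolding \<delta>_def by simp
    then obtain d where "d \<in> D" "d < \<delta> + 1 / real (Suc n)" using cInf_lessD[OF Dne] by blast
    thus "\<exists>m. m \<in> M \<and> vnorm (x - m) < \<delta> + 1 / real (Suc n)" by (auto simp: D_def)
  qed
  then obtain mm where mm: "\<And>n. mm n \<in> M" "\<And>n. vnorm (x - mm n) < \<delta> + 1 / real (Suc n)"
    by metis
  have mmL: "mm n \<in> ell2" for n using mm M by blast
  have bound: "(vnorm (mm j - mm k))^2 \<le> (4*\<delta>+2) * (1/real (Suc j) + 1/real (Suc k))" for j k
  proof -
    define ej where "ej = 1/real (Suc j)"
    define ek where "ek = 1/real (Suc k)"
    have ej: "0 \<le> ej" "ej \<le> 1" and ek: "0 \<le> ek" "ek \<le> 1" by (auto simp: ej_def ek_def)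
    define a where "a = x - mm k"
    define b where "b = x - mm j"
    have aL: "a \<in> ell2" and bL: "b \<in> ell2" using x mmL ell2_diff by (auto simp: a_def b_def)
    define w where "w = csmul (1/2) (mm k + mm j)"
    have wM: "w \<in> M" unfolding w_def using M(4)[OF M(3)[OF mm(1) mm(1)]] .
    have ab: "a + b = csmul 2 (x - w)"
      unfolding a_def b_def w_def csmul_def by (auto simp: field_simps)
    have "vnorm (a + b) = 2 * vnorm (x - w)" by (simp add: ab vnorm_csmul)
    hence ab2: "vnorm (a + b) \<ge> 2 * \<delta>" using low[OF wM] by simp
    have "a - b = mm j - mm k" by (simp add: a_def b_def)
    hence "(vnorm (mm j - mm k))^2 = 2*(vnorm a)^2 + 2*(vnorm b)^2 - (vnorm (a + b))^2"
      using parallelogram[OF aL bL] by simp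
    also have "\<dots> \<le> 2*(\<delta> + ek)^2 + 2*(\<delta>+ej)^2 - (2*\<delta>)^2"
    proof -
      have "vnorm a \<le> \<delta> + ek" using mm(2)[of k] by (simp add: a_def ek_def)
      hence 1: "(vnorm a)^2 \<le> (\<delta> + ek)^2" by (intro power_mono) auto
      have "vnorm b \<le> \<delta> + ej" using mm(2)[of j] by (simp add: b_def ej_def)
      hence 2: "(vnorm b)^2 \<le> (\<delta> + ej)^2" by (intro power_mono) auto
      have 3: "(2*\<delta>)^2 \<le> (vnorm (a+b))^2" using ab2 d0 by (intro power_mono) auto
      show ?thesis using 1 2 3 by linarith
    qed
    also have "\<dots> = 4*\<delta>*(ek+ej) + 2*ek*ek + 2*ej*ej" by (simp add: power2_eq_square algebra_simps)
    also have "\<dots> \<le> (4*\<delta>+2)*(ej+ek)"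
    proof -
      have "ek*ek \<le> ek" "ej*ej \<le> ej" using ek ej by (auto intro: mult_left_le_one_le mult_le_one
          simp: mult_right_le_one_le)
      thus ?thesis by (simp add: algebra_simps)
    qed
    finally show ?thesis by (simp add: ej_def ek_def)
  qed
  have cau: "\<exists>N. \<forall>m\<ge>N. \<forall>n\<ge>N. vnorm (mm m - mm n) < e" if e: "e > 0" for e
  proof -
    have r: "e^2 / (8*\<delta>+4) > 0" using e d0 by auto
    obtain N where N: "inverse (real (Suc N)) < e^2 / (8*\<delta>+4)" using reals_Archimedean[OF r] by blast
    show ?thesis
    proof (intro exI allI impI)
      fix m n assume mn: "N \<le> m" "N \<le> n"
      have "1/real (Suc m) \<le> 1/real (Suc N)" "1/real (Suc n) \<le> 1/real (Suc N)"
        using mn by (auto simp: divide_simps)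
      hence "1/real (Suc m) + 1/real (Suc n) \<le> 2 * inverse (real (Suc N))" by (simp add: inverse_eq_divide)
      hence "(4*\<delta>+2) * (1/real (Suc m) + 1/real (Suc n)) \<le> (4*\<delta>+2) * (2 * inverse (real (Suc N)))"
        using d0 by (intro mult_left_mono) auto
      also have "\<dots> < (4*\<delta>+2) * (2 * (e^2 / (8*\<delta>+4)))"
        using N d0 by (intro mult_strict_left_mono) auto
      also have "\<dots> = e^2" using d0 by (simp add: field_simps)
      finally have "(vnorm (mm m - mm n))^2 < e^2" using bound[of m n] by linarith
      thus "vnorm (mm m - mm n) < e" using e by (simp add: power_less_imp_less_base)
    qed
  qed
  obtain m where mL: "m \<in> ell2" and conv: "\<And>e. e>0 \<Longrightarrow> \<exists>N. \<forall>n\<ge>N. vnorm (mm n - m) < e"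
    using ell2_complete[of mm, OF mmL cau] by blast
  have "m \<in> l2closure M"
    unfolding l2closure_def
  proof (intro CollectI conjI allI impI mL)
    fix e :: real assume "e > 0"
    then obtain N where "\<forall>n\<ge>N. vnorm (mm n - m) < e" using conv by blast
    hence "vnorm (m - mm N) < e" by (simp add: vnorm_minus_commute)
    thus "\<exists>y\<in>M. vnorm (m - y) < e" using mm(1) by blast
  qed
  hence mM: "m \<in> M" using M(5) by blast
  have "vnorm (x - m) \<le> \<delta>"
  proof (rule field_le_epsilon)
    fix e :: real assume e: "e > 0"
    obtain N1 where N1: "\<forall>n\<ge>N1. vnorm (mm n - m) < e/2" using conv[of "e/2"] e by auto
    obtain N2 where N2: "inverse (real (Suc N2)) < e/2" using reals_Archimedean[of "e/2"] e by auto
    define n where "n = max N1 N2"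
    have "vnorm (x - m) \<le> vnorm (x - mm n) + vnorm (mm n - m)"
      using vnorm_triangle_diff[OF x mmL mL] .
    also have "\<dots> < (\<delta> + 1/real (Suc n)) + e/2" using mm(2)[of n] N1[rule_format, of n] by (auto simp: n_def)
    also have "1/real (Suc n) \<le> inverse (real (Suc N2))"
      by (auto simp: n_def divide_simps inverse_eq_divide)
    finally show "vnorm (x - m) \<le> \<delta> + e" using N2 by simp
  qed
  hence "\<forall>y\<in>M. vnorm (x - m) \<le> vnorm (x - y)" using low by (auto intro: order_trans)
  thus ?thesis using mM by blast
qed

lemma proj_exists:
  assumes cs: "closed_subspace M" and x: "x \<in> ell2"
  shows "\<exists>m\<in>M. \<forall>y\<in>M. cinner y (x - m) = 0"
proof -
  have M: "M \<subseteq> ell2" "0 \<in> M" "\<And>a b. a \<in> M \<Longrightarrow> b \<in> M \<Longrightarrow> a + b \<in> M"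
    "\<And>c a. a \<in> M \<Longrightarrow> csmul c a \<in> M"
    using cs unfolding closed_subspace_def by auto
  obtain m where mM: "m \<in> M" and min: "\<forall>y\<in>M. vnorm (x - m) \<le> vnorm (x - y)"
    using minimizer_exists[OF assms] by blast
  have "cinner y (x - m) = 0" if yM: "y \<in> M" for y
  proof -
    define z where "z = x - m"
    have yL: "y \<in> ell2" using yM M by blast
    have zL: "z \<in> ell2" unfolding z_def using x mM M(1) ell2_diff by blast
    define c where "c = cinner y z"
    define r where "r = 1 / ((vnorm y)^2 + 1)"
    have "(vnorm y)^2 \<ge> 0" by simp
    hence p: "(vnorm y)^2 + 1 > 0" by linarith
    have r0: "r > 0" using p by (simp add: r_def)
    have r1: "r * (vnorm y)^2 < 1" using p by (simp add: r_def divide_simps)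
    define t where "t = complex_of_real r * c"
    have wM: "m + csmul t y \<in> M" using M(3)[OF mM M(4)[OF yM]] .
    have ty: "csmul (-t) y \<in> ell2" using yL ell2_csmul by blast
    have xw: "x - (m + csmul t y) = z + csmul (-t) y"
      by (rule ext) (simp add: z_def csmul_def algebra_simps)
    have A0: "vnorm z \<le> vnorm (z + csmul (-t) y)"
      using bspec[OF min wM] unfolding xw by (simp add: z_def)
    have A: "(vnorm z)^2 \<le> (vnorm (z + csmul (-t) y))^2"
      using A0 by (intro power_mono) auto
    have B: "(vnorm (z + csmul (-t) y))^2 = (vnorm z)^2 + 2 * Re (cinner z (csmul (-t) y)) + (vnorm (csmul (-t) y))^2"
      using norm_add_sq[OF zL ty] .
    have cc: "c * cnj c = complex_of_real ((cmod c)^2)" by (metis complex_norm_square)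
    have "cinner z (csmul (-t) y) = - (complex_of_real r * (c * cnj c))"
      by (simp add: cinner_smul_right t_def c_def cinner_commute[of z y] mult.assoc)
    hence C: "Re (cinner z (csmul (-t) y)) = - (r * (cmod c)^2)"
      unfolding cc by simp
    have D: "(vnorm (csmul (-t) y))^2 = (r * (cmod c)^2) * (r * (vnorm y)^2)"
      using r0 by (simp add: vnorm_csmul t_def norm_mult power_mult_distrib power2_eq_square)
    define u where "u = r * (cmod c)^2"
    have u0: "u \<ge> 0" using r0 by (simp add: u_def)
    have "2 * u \<le> u * (r * (vnorm y)^2)" using A B C D unfolding u_def by linarith
    also have "\<dots> \<le> u" using r1 u0 by (simp add: mult_left_le)
    finally have "u \<le> 0" by simp
    hence "(cmod c)^2 \<le> 0" using r0 by (simp add: u_def mult_le_0_iff)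
    hence "c = 0" by simp
    thus ?thesis by (simp add: c_def z_def)
  qed
  thus ?thesis using mM by blast
qed


section \<open>Closed subspaces, bounded operators, spans, closures\<close>

lemma cs_ell2: "closed_subspace S \<Longrightarrow> S \<subseteq> ell2"
  by (simp add: closed_subspace_def)
lemma cs_zero: "closed_subspace S \<Longrightarrow> 0 \<in> S"
  by (simp add: closed_subspace_def)
lemma cs_add: "closed_subspace S \<Longrightarrow> x \<in> S \<Longrightarrow> y \<in> S \<Longrightarrow> x + y \<in> S"
  by (simp add: closed_subspace_def)
lemma cs_smul: "closed_subspace S \<Longrightarrow> x \<in> S \<Longrightarrow> csmul c x \<in> S"
  by (simp add: closed_subspace_def)
lemma cs_closed: "closed_subspace S \<Longrightarrow> l2closure S \<subseteq> S"
  by (simp add: closed_subspace_def)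
lemma cs_uminus: "closed_subspace S \<Longrightarrow> x \<in> S \<Longrightarrow> - x \<in> S"
  using cs_smul[of S x "-1"] by (simp add: csmul_minus1)
lemma cs_diff: "closed_subspace S \<Longrightarrow> x \<in> S \<Longrightarrow> y \<in> S \<Longrightarrow> x - y \<in> S"
  using cs_add[of S x "-y"] cs_uminus[of S y] by simp
lemma cs_mem_ell2: "closed_subspace S \<Longrightarrow> x \<in> S \<Longrightarrow> x \<in> ell2"
  using cs_ell2 by blast

lemma bop_maps: "bop S b \<Longrightarrow> x \<in> S \<Longrightarrow> b x \<in> S"
  by (simp add: bop_def)
lemma bop_add: "bop S b \<Longrightarrow> x \<in> S \<Longrightarrow> y \<in> S \<Longrightarrow> b (x + y) = b x + b y"
  by (simp add: bop_def)
lemma bop_smul: "bop S b \<Longrightarrow> x \<in> S \<Longrightarrow> b (csmul c x) = csmul c (b x)"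
  by (simp add: bop_def)
lemma bop_out: "bop S b \<Longrightarrow> x \<notin> S \<Longrightarrow> b x = 0"
  by (simp add: bop_def)
lemma bop_zero: assumes "bop S b" "closed_subspace S" shows "b 0 = 0"
proof -
  have "b (csmul 0 0) = csmul 0 (b 0)" using bop_smul[OF assms(1) cs_zero[OF assms(2)]] .
  thus ?thesis by (simp add: csmul_def zero_fun_def)
qed
lemma bop_uminus: "bop S b \<Longrightarrow> x \<in> S \<Longrightarrow> b (- x) = - b x"
  using bop_smul[of S b x "-1"] by (simp add: csmul_minus1)
lemma bop_diff: "bop S b \<Longrightarrow> closed_subspace S \<Longrightarrow> x \<in> S \<Longrightarrow> y \<in> S \<Longrightarrow> b (x - y) = b x - b y"
  using bop_add[of S b x "-y"] bop_uminus[of S b y] cs_uminus[of S y] by simp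
lemma bop_bound: assumes "bop S b" shows "\<exists>C>0. \<forall>x\<in>S. vnorm (b x) \<le> C * vnorm x"
proof -
  obtain C where C: "\<forall>x\<in>S. vnorm (b x) \<le> C * vnorm x" using assms by (auto simp: bop_def)
  have "\<forall>x\<in>S. vnorm (b x) \<le> (max C 1) * vnorm x"
  proof
    fix x assume "x \<in> S"
    hence "vnorm (b x) \<le> C * vnorm x" using C by blast
    also have "\<dots> \<le> max C 1 * vnorm x" by (intro mult_right_mono) auto
    finally show "vnorm (b x) \<le> max C 1 * vnorm x" .
  qed
  thus ?thesis by (intro exI[of _ "max C 1"]) auto
qed

lemma bop_comp: assumes "bop S f" "bop S g" "closed_subspace S" shows "bop S (f \<circ> g)"
proof -
  obtain C1 where C1: "C1 > 0" "\<forall>x\<in>S. vnorm (f x) \<le> C1 * vnorm x" using bop_bound[OF assms(1)] by blast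
  obtain C2 where C2: "C2 > 0" "\<forall>x\<in>S. vnorm (g x) \<le> C2 * vnorm x" using bop_bound[OF assms(2)] by blast
  have "\<forall>x\<in>S. vnorm (f (g x)) \<le> (C1 * C2) * vnorm x"
  proof
    fix x assume x: "x \<in> S"
    have "vnorm (f (g x)) \<le> C1 * vnorm (g x)" using C1 bop_maps[OF assms(2) x] by blast
    also have "\<dots> \<le> C1 * (C2 * vnorm x)" using C2 x C1(1) by (intro mult_left_mono) auto
    finally show "vnorm (f (g x)) \<le> (C1 * C2) * vnorm x" by (simp add: mult.assoc)
  qed
  moreover have "\<forall>x. x \<notin> S \<longrightarrow> f (g x) = 0"
    using bop_out[OF assms(2)] bop_zero[OF assms(1,3)] by simp
  ultimately show ?thesis using assms unfolding bop_def by auto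
qed

definition lsum :: "nat \<Rightarrow> (nat \<Rightarrow> complex) \<Rightarrow> (nat \<Rightarrow> 'i vec) \<Rightarrow> 'i vec" where
  "lsum n c v = (\<Sum>k<n. csmul (c k) (v k))"

lemma lin_span_lsum: "lin_span X = {lsum n c v | n c v. \<forall>k<n. v k \<in> X}"
  unfolding lin_span_def lsum_def by blast

lemma lsum_Suc: "lsum (Suc n) c v = lsum n c v + csmul (c n) (v n)"
  by (simp add: lsum_def)
lemma lsum_0: "lsum 0 c v = 0"
  by (simp add: lsum_def)

lemma csmul_lsum: "csmul a (lsum n c v) = lsum n (\<lambda>k. a * c k) v"
  by (induction n) (auto simp: lsum_Suc lsum_0 csmul_def fun_eq_iff algebra_simps)

lemma lsum_cong: "(\<And>k. k < n \<Longrightarrow> c k = c' k \<and> v k = v' k) \<Longrightarrow> lsum n c v = lsum n c' v'"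
  unfolding lsum_def by (rule sum.cong) auto

lemma lsum_in: assumes "closed_subspace S" "\<forall>k<n. v k \<in> S" shows "lsum n c v \<in> S"
  using assms(2)
proof (induction n)
  case 0 show ?case unfolding lsum_0 using cs_zero[OF assms(1)] .
next
  case (Suc n)
  have a: "lsum n c v \<in> S" using Suc by simp
  have b: "v n \<in> S" using Suc.prems by simp
  show ?case unfolding lsum_Suc by (rule cs_add[OF assms(1) a cs_smul[OF assms(1) b]])
qed

lemma ell2_cs: "closed_subspace ell2"
  unfolding closed_subspace_def l2closure_def using ell2_add ell2_csmul by auto

lemma lsum_ell2: "\<forall>k<n. v k \<in> ell2 \<Longrightarrow> lsum n c v \<in> ell2"
  using lsum_in[OF ell2_cs] by blast

lemma bop_lsum: assumes "bop S b" "closed_subspace S" "\<forall>k<n. v k \<in> S"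
  shows "b (lsum n c v) = lsum n c (\<lambda>k. b (v k))"
  using assms(3)
proof (induction n)
  case 0 show ?case unfolding lsum_0 using bop_zero[OF assms(1,2)] .
next
  case (Suc n)
  have vn: "v n \<in> S" using Suc.prems by simp
  have ls: "lsum n c v \<in> S" using Suc.prems lsum_in[OF assms(2), of n v c] by simp
  have "b (lsum (Suc n) c v) = b (lsum n c v) + b (csmul (c n) (v n))"
    unfolding lsum_Suc by (rule bop_add[OF assms(1) ls cs_smul[OF assms(2) vn]])
  also have "b (csmul (c n) (v n)) = csmul (c n) (b (v n))" by (rule bop_smul[OF assms(1) vn])
  also have "b (lsum n c v) = lsum n c (\<lambda>k. b (v k))" using Suc by simp
  finally show ?case unfolding lsum_Suc .
qed

lemma cinner_lsum_left: assumes "\<forall>k<n. v k \<in> ell2" "y \<in> ell2"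
  shows "cinner (lsum n c v) y = (\<Sum>k<n. cnj (c k) * cinner (v k) y)"
  using assms(1)
proof (induction n)
  case 0 show ?case unfolding lsum_0 cinner_zero_left by simp
next
  case (Suc n)
  have "cinner (lsum (Suc n) c v) y = cinner (lsum n c v) y + cinner (csmul (c n) (v n)) y"
    unfolding lsum_Suc using Suc.prems lsum_ell2[of n v c] ell2_csmul assms(2)
    by (intro cinner_add_left) auto
  thus ?case using Suc by (simp add: cinner_smul_left)
qed

lemma lin_span_sub: "closed_subspace S \<Longrightarrow> X \<subseteq> S \<Longrightarrow> lin_span X \<subseteq> S"
  unfolding lin_span_lsum using lsum_in by blast

lemma lin_span_ell2: "X \<subseteq> ell2 \<Longrightarrow> lin_span X \<subseteq> ell2"
  using lin_span_sub[OF ell2_cs] .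

lemma lin_span_base: "x \<in> X \<Longrightarrow> x \<in> lin_span X"
  unfolding lin_span_lsum
  by (rule CollectI, rule exI[of _ 1], rule exI[of _ "\<lambda>_. 1"], rule exI[of _ "\<lambda>_. x"])
     (simp add: lsum_def csmul_def)

lemma lin_span_zero: "0 \<in> lin_span X"
  unfolding lin_span_lsum by (auto simp: lsum_0 intro!: exI[of _ 0])

lemma lin_span_smul: assumes "x \<in> lin_span X" shows "csmul a x \<in> lin_span X"
proof -
  obtain n c v where x: "x = lsum n c v" "\<forall>k<n. v k \<in> X" using assms unfolding lin_span_lsum by blast
  have "csmul a x = lsum n (\<lambda>k. a * c k) v"
    unfolding x by (rule csmul_lsum)
  thus ?thesis using x unfolding lin_span_lsum by blast
qed

lemma lin_span_add: assumes "x \<in> lin_span X" "y \<in> lin_span X" shows "x + y \<in> lin_span X"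
proof -
  obtain n c v where x: "x = lsum n c v" "\<forall>k<n. v k \<in> X" using assms(1) unfolding lin_span_lsum by blast
  obtain m d w where y: "y = lsum m d w" "\<forall>k<m. w k \<in> X" using assms(2) unfolding lin_span_lsum by blast
  define c' where "c' k = (if k < n then c k else d (k - n))" for k
  define v' where "v' k = (if k < n then v k else w (k - n))" for k
  have "lsum (n + j) c' v' = lsum n c v + lsum j d w" for j
  proof (induction j)
    case 0
    have "lsum n c' v' = lsum n c v" by (rule lsum_cong) (simp add: c'_def v'_def)
    thus ?case unfolding lsum_0 by simp
  next
    case (Suc j)
    have e: "c' (n+j) = d j" "v' (n+j) = w j" by (auto simp: c'_def v'_def)
    have "lsum (n + Suc j) c' v' = lsum (n + j) c' v' + csmul (c' (n+j)) (v' (n+j))"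
      by (simp only: add_Suc_right lsum_Suc)
    also have "\<dots> = (lsum n c v + lsum j d w) + csmul (d j) (w j)" by (simp only: e Suc)
    also have "\<dots> = lsum n c v + lsum (Suc j) d w" by (simp only: lsum_Suc add.assoc)
    finally show ?case .
  qed
  moreover have "\<forall>k<n+m. v' k \<in> X" using x y by (auto simp: v'_def)
  ultimately have "x + y = lsum (n+m) c' v' \<and> (\<forall>k<n+m. v' k \<in> X)" using x(1) y(1) by simp
  thus ?thesis unfolding lin_span_lsum by blast
qed

lemma bop_lin_span: assumes "bop S b" "closed_subspace S" "X \<subseteq> S"
  shows "b ` lin_span X \<subseteq> lin_span (b ` X)"
proof
  fix z assume "z \<in> b ` lin_span X"
  then obtain n c v where z: "z = b (lsum n c v)" "\<forall>k<n. v k \<in> X" unfolding lin_span_lsum by blast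
  have "z = lsum n c (\<lambda>k. b (v k))" using z bop_lsum[OF assms(1,2)] assms(3) by blast
  thus "z \<in> lin_span (b ` X)" using z(2) unfolding lin_span_lsum by blast
qed

lemma perp_lin_span: assumes "X \<subseteq> ell2" "y \<in> ell2" "\<forall>x\<in>X. cinner x y = 0" "z \<in> lin_span X"
  shows "cinner z y = 0"
proof -
  obtain n c v where z: "z = lsum n c v" "\<forall>k<n. v k \<in> X" using assms(4) unfolding lin_span_lsum by blast
  have "\<forall>k<n. v k \<in> ell2" using z assms(1) by blast
  thus ?thesis using cinner_lsum_left[OF _ assms(2)] z assms(3) by simp
qed

lemma l2closureE: "x \<in> l2closure Z \<Longrightarrow> e > 0 \<Longrightarrow> \<exists>z\<in>Z. vnorm (x - z) < e"
  unfolding l2closure_def by blast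

lemma l2closure_ell2: "l2closure Z \<subseteq> ell2"
  by (auto simp: l2closure_def)

lemma l2closure_sup: "Z \<subseteq> ell2 \<Longrightarrow> Z \<subseteq> l2closure Z"
  unfolding l2closure_def by (auto intro!: bexI)

lemma l2closure_mono: "Z \<subseteq> W \<Longrightarrow> l2closure Z \<subseteq> l2closure W"
  unfolding l2closure_def by blast

lemma l2closure_sub: "closed_subspace S \<Longrightarrow> Z \<subseteq> S \<Longrightarrow> l2closure Z \<subseteq> S"
  using l2closure_mono cs_closed by blast

lemma bop_l2closure: assumes "bop S b" "closed_subspace S" "Z \<subseteq> S"
  shows "b ` l2closure Z \<subseteq> l2closure (b ` Z)"
proof
  fix u assume "u \<in> b ` l2closure Z"
  then obtain x where x: "x \<in> l2closure Z" "u = b x" by blast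
  have xS: "x \<in> S" using x l2closure_sub[OF assms(2,3)] by blast
  obtain C where C: "C > 0" "\<forall>x\<in>S. vnorm (b x) \<le> C * vnorm x" using bop_bound[OF assms(1)] by blast
  have xc: "\<forall>e>0. \<exists>y\<in>Z. vnorm (x - y) < e" using x(1) by (simp add: l2closure_def)
  have "\<exists>y\<in>b ` Z. vnorm (b x - y) < e" if e: "e > 0" for e
  proof -
    have "e / C > 0" using e C by simp
    then obtain z where z: "z \<in> Z" "vnorm (x - z) < e / C" using xc by blast
    have zS: "z \<in> S" using z assms(3) by blast
    have "vnorm (b x - b z) = vnorm (b (x - z))" using bop_diff[OF assms(1,2) xS zS] by simp
    also have "\<dots> \<le> C * vnorm (x - z)" using C cs_diff[OF assms(2) xS zS] by blast
    also have "\<dots> < C * (e / C)" using z C by (intro mult_strict_left_mono) auto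
    also have "\<dots> = e" using C by simp
    finally show ?thesis using z by blast
  qed
  moreover have "b x \<in> ell2" using bop_maps[OF assms(1) xS] cs_ell2[OF assms(2)] by blast
  ultimately show "u \<in> l2closure (b ` Z)" unfolding l2closure_def x by blast
qed

lemma perp_l2closure: assumes "Z \<subseteq> ell2" "y \<in> ell2" "\<forall>z\<in>Z. cinner z y = 0" "x \<in> l2closure Z"
  shows "cinner x y = 0"
proof -
  have xL: "x \<in> ell2" using assms(4) l2closure_ell2 by blast
  have "cmod (cinner x y) \<le> 0 + e" if e: "e > 0" for e
  proof -
    have "vnorm y + 1 > 0" using vnorm_ge0[of y] by linarith
    hence "e / (vnorm y + 1) > 0" using e by simp
    then obtain z where z: "z \<in> Z" "vnorm (x - z) < e / (vnorm y + 1)"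
      using l2closureE[OF assms(4)] by blast
    have zL: "z \<in> ell2" using z assms(1) by blast
    have "cinner x y = cinner (x - z) y" using cinner_diff_left[OF xL zL assms(2)] z assms(3) by simp
    hence "cmod (cinner x y) \<le> vnorm (x - z) * vnorm y"
      using cauchy_schwarz[OF ell2_diff[OF xL zL] assms(2)] by simp
    also have "\<dots> \<le> (e / (vnorm y + 1)) * vnorm y" using z by (intro mult_right_mono) auto
    also have "\<dots> \<le> e" using e \<open>vnorm y + 1 > 0\<close> by (simp add: divide_simps)
    finally show ?thesis by simp
  qed
  hence "cmod (cinner x y) \<le> 0" by (rule field_le_epsilon)
  thus ?thesis by simp
qed

lemma cs_closure_span: assumes "X \<subseteq> ell2" shows "closed_subspace (l2closure (lin_span X))"
proof -
  let ?L = "lin_span X"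
  let ?K = "l2closure ?L"
  have LL: "?L \<subseteq> ell2" using lin_span_ell2[OF assms] .
  have KL: "?K \<subseteq> ell2" by (rule l2closure_ell2)
  have zero: "0 \<in> ?K" using l2closure_sup[OF LL] lin_span_zero by blast
  have add: "x + y \<in> ?K" if "x \<in> ?K" "y \<in> ?K" for x y
  proof -
    have xL: "x \<in> ell2" "y \<in> ell2" using that KL by auto
    have "\<exists>w\<in>?L. vnorm (x + y - w) < e" if e: "e > 0" for e
    proof -
      have e2: "e/2 > 0" using e by simp
      obtain x' where x': "x' \<in> ?L" "vnorm (x - x') < e/2" using l2closureE[OF \<open>x \<in> ?K\<close> e2] by blast
      obtain y' where y': "y' \<in> ?L" "vnorm (y - y') < e/2" using l2closureE[OF \<open>y \<in> ?K\<close> e2] by blast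
      have L': "x' \<in> ell2" "y' \<in> ell2" using x' y' LL by auto
      have eq: "x + y - (x' + y') = (x - x') + (y - y')" by (simp add: algebra_simps)
      have "vnorm (x + y - (x' + y')) \<le> vnorm (x - x') + vnorm (y - y')"
        using vnorm_triangle[OF ell2_diff[OF xL(1) L'(1)] ell2_diff[OF xL(2) L'(2)]] by (simp only: eq)
      thus ?thesis using x' y' lin_span_add[of x' X y'] by (intro bexI[of _ "x'+y'"]) auto
    qed
    thus ?thesis using ell2_add[OF xL] unfolding l2closure_def by blast
  qed
  have smul: "csmul c x \<in> ?K" if "x \<in> ?K" for c x
  proof (cases "c = 0")
    case True
    hence "csmul c x = 0" by (auto simp: csmul_def)
    thus ?thesis using zero by simp
  next
    case False
    have xL: "x \<in> ell2" using that KL by auto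
    have "\<exists>w\<in>?L. vnorm (csmul c x - w) < e" if e: "e > 0" for e
    proof -
      have ec: "e / cmod c > 0" using e False by simp
      obtain x' where x': "x' \<in> ?L" "vnorm (x - x') < e / cmod c" using l2closureE[OF \<open>x \<in> ?K\<close> ec] by blast
      have "csmul c x - csmul c x' = csmul c (x - x')" by (rule ext) (simp add: csmul_def algebra_simps)
      hence "vnorm (csmul c x - csmul c x') = cmod c * vnorm (x - x')" by (simp add: vnorm_csmul)
      also have "\<dots> < cmod c * (e / cmod c)" using x' False by (intro mult_strict_left_mono) auto
      also have "\<dots> = e" using False by simp
      finally show ?thesis using x' lin_span_smul by blast
    qed
    thus ?thesis using ell2_csmul[OF xL] unfolding l2closure_def by blast
  qed
  have closed: "l2closure ?K \<subseteq> ?K"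
  proof
    fix x assume x: "x \<in> l2closure ?K"
    have "\<exists>w\<in>?L. vnorm (x - w) < e" if e: "e > 0" for e
    proof -
      have e2: "e/2 > 0" using e by simp
      obtain y where y: "y \<in> ?K" "vnorm (x - y) < e/2" using l2closureE[OF x e2] by blast
      obtain z where z: "z \<in> ?L" "vnorm (y - z) < e/2" using l2closureE[OF y(1) e2] by blast
      have "x \<in> ell2" "y \<in> ell2" "z \<in> ell2" using x y z KL LL l2closure_ell2 by auto
      hence "vnorm (x - z) \<le> vnorm (x - y) + vnorm (y - z)" by (rule vnorm_triangle_diff)
      thus ?thesis using y z by (intro bexI[of _ z]) auto
    qed
    thus "x \<in> ?K" using x l2closure_ell2 unfolding l2closure_def by blast
  qed
  show ?thesis unfolding closed_subspace_def using KL zero add smul closed by blast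
qed


definition projto :: "'i vec set \<Rightarrow> 'i vec set \<Rightarrow> 'i op" where
  "projto K M x = (if x \<in> K then (SOME m. m \<in> M \<and> (\<forall>y\<in>M. cinner y (x - m) = 0)) else 0)"

lemma proj_unique:
  assumes cs: "closed_subspace M" and x: "x \<in> ell2"
    and m1: "m1 \<in> M" "\<forall>y\<in>M. cinner y (x - m1) = 0"
    and m2: "m2 \<in> M" "\<forall>y\<in>M. cinner y (x - m2) = 0"
  shows "m1 = m2"
proof -
  have L: "m1 \<in> ell2" "m2 \<in> ell2" using m1 m2 cs_mem_ell2[OF cs] by auto
  have dM: "m1 - m2 \<in> M" using cs_diff[OF cs m1(1) m2(1)] .
  have "cinner (m1 - m2) (x - m1) = 0" "cinner (m1 - m2) (x - m2) = 0" using dM m1 m2 by auto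
  hence "cinner (m1 - m2) x - cinner (m1 - m2) m1 = 0" "cinner (m1 - m2) x - cinner (m1 - m2) m2 = 0"
    using cinner_diff_right[OF x L(1) ell2_diff[OF L]] cinner_diff_right[OF x L(2) ell2_diff[OF L]] by auto
  hence "cinner (m1 - m2) m1 = cinner (m1 - m2) m2" by simp
  thus ?thesis using cinner_eq_imp_eq[OF L] by blast
qed

locale projsetup =
  fixes K M :: "'i vec set"
  assumes csK: "closed_subspace K" and csM: "closed_subspace M" and MK: "M \<subseteq> K"
begin

abbreviation "q \<equiv> projto K M"

lemma q_prop: assumes "x \<in> K" shows "q x \<in> M \<and> (\<forall>y\<in>M. cinner y (x - q x) = 0)"
proof -
  have "x \<in> ell2" using assms cs_mem_ell2[OF csK] by blast
  hence "\<exists>m. m \<in> M \<and> (\<forall>y\<in>M. cinner y (x - m) = 0)" using proj_exists[OF csM] by blast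
  hence "(SOME m. m \<in> M \<and> (\<forall>y\<in>M. cinner y (x - m) = 0)) \<in> M \<and>
     (\<forall>y\<in>M. cinner y (x - (SOME m. m \<in> M \<and> (\<forall>y\<in>M. cinner y (x - m) = 0))) = 0)"
    by (rule someI_ex)
  thus ?thesis using assms by (simp add: projto_def)
qed

lemma q_in: "x \<in> K \<Longrightarrow> q x \<in> M" using q_prop by blast
lemma q_perp: "x \<in> K \<Longrightarrow> y \<in> M \<Longrightarrow> cinner y (x - q x) = 0" using q_prop by blast
lemma q_out: "x \<notin> K \<Longrightarrow> q x = 0" by (simp add: projto_def)

lemma q_char: assumes "x \<in> K" "m \<in> M" "\<forall>y\<in>M. cinner y (x - m) = 0" shows "q x = m"
  using proj_unique[OF csM cs_mem_ell2[OF csK assms(1)]] q_prop[OF assms(1)] assms(2,3) by blast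

lemma q_fix: "x \<in> M \<Longrightarrow> q x = x"
  using q_char[of x x] MK by auto

lemma q_inK: "x \<in> K \<Longrightarrow> q x \<in> K" using q_in MK by blast

lemma MellL: "y \<in> M \<Longrightarrow> y \<in> ell2" using cs_mem_ell2[OF csM] .
lemma KellL: "y \<in> K \<Longrightarrow> y \<in> ell2" using cs_mem_ell2[OF csK] .

lemma q_diffL: "x \<in> K \<Longrightarrow> x - q x \<in> ell2"
  using KellL cs_diff[OF csK _ q_inK] by blast
lemma q_L: "x \<in> K \<Longrightarrow> q x \<in> ell2"
  using KellL q_inK by blast

lemma q_add: assumes "x \<in> K" "y \<in> K" shows "q (x + y) = q x + q y"
proof (rule q_char)
  show "x + y \<in> K" using cs_add[OF csK assms] .
  show "q x + q y \<in> M" using cs_add[OF csM q_in[OF assms(1)] q_in[OF assms(2)]] .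
  show "\<forall>z\<in>M. cinner z (x + y - (q x + q y)) = 0"
  proof
    fix z assume z: "z \<in> M"
    have e: "x + y - (q x + q y) = (x - q x) + (y - q y)" by (simp add: algebra_simps)
    have "cinner z ((x - q x) + (y - q y)) = cinner z (x - q x) + cinner z (y - q y)"
      using cinner_add_right[OF q_diffL[OF assms(1)] q_diffL[OF assms(2)] MellL[OF z]] .
    thus "cinner z (x + y - (q x + q y)) = 0" using q_perp assms z by (simp only: e) simp
  qed
qed

lemma q_smul: assumes "x \<in> K" shows "q (csmul c x) = csmul c (q x)"
proof (rule q_char)
  show "csmul c x \<in> K" using cs_smul[OF csK assms] .
  show "csmul c (q x) \<in> M" using cs_smul[OF csM q_in[OF assms]] .
  show "\<forall>z\<in>M. cinner z (csmul c x - csmul c (q x)) = 0"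
  proof
    fix z assume z: "z \<in> M"
    have e: "csmul c x - csmul c (q x) = csmul c (x - q x)" by (rule ext) (simp add: csmul_def algebra_simps)
    show "cinner z (csmul c x - csmul c (q x)) = 0" unfolding e cinner_smul_right using q_perp assms z by simp
  qed
qed

lemma q_bound: assumes "x \<in> K" shows "vnorm (q x) \<le> 1 * vnorm x"
proof -
  have L: "q x \<in> ell2" "x - q x \<in> ell2" using q_L q_diffL assms by auto
  have "x = q x + (x - q x)" by simp
  hence "(vnorm x)^2 = (vnorm (q x))^2 + 2 * Re (cinner (q x) (x - q x)) + (vnorm (x - q x))^2"
    using norm_add_sq[OF L] by simp
  also have "cinner (q x) (x - q x) = 0" using q_perp[OF assms q_in[OF assms]] .
  finally have "(vnorm (q x))^2 \<le> (vnorm x)^2" by simp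
  hence "vnorm (q x) \<le> vnorm x" by (rule power2_le_imp_le) simp
  thus ?thesis by simp
qed

lemma q_zero: "q 0 = 0"
  using q_fix cs_zero[OF csM] by blast

lemma q_bop: "bop K q"
  unfolding bop_def using q_inK q_add q_smul q_bound q_out by blast

lemma q_idem: "q \<circ> q = q"
proof
  fix x show "(q \<circ> q) x = q x"
    by (cases "x \<in> K") (auto simp: q_out q_zero q_fix q_in)
qed

lemma q_selfadj: "is_adj K q q"
  unfolding is_adj_def
proof (intro conjI q_bop ballI)
  fix x y assume x: "x \<in> K" and y: "y \<in> K"
  have L: "q x \<in> ell2" "q y \<in> ell2" "x - q x \<in> ell2" "y - q y \<in> ell2"
    using q_L q_diffL x y by auto
  have "cinner (q x) y = cinner (q x) (q y + (y - q y))" by simp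
  also have "\<dots> = cinner (q x) (q y) + cinner (q x) (y - q y)" using cinner_add_right L by blast
  also have "cinner (q x) (y - q y) = 0" using q_perp[OF y q_in[OF x]] .
  finally have 1: "cinner (q x) y = cinner (q x) (q y)" by simp
  have "cinner x (q y) = cinner (q x + (x - q x)) (q y)" by simp
  also have "\<dots> = cinner (q x) (q y) + cinner (x - q x) (q y)" using cinner_add_left L by blast
  also have "cinner (x - q x) (q y) = cnj (cinner (q y) (x - q x))" by (rule cinner_commute)
  also have "cinner (q y) (x - q x) = 0" using q_perp[OF x q_in[OF y]] .
  finally have 2: "cinner x (q y) = cinner (q x) (q y)" by simp
  show "cinner (q x) y = cinner x (q y)" using 1 2 by simp
qed

lemma q_projection: "is_projection K q"
  unfolding is_projection_def using q_bop q_idem q_selfadj by blast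

lemma q_commute:
  assumes b: "bop K b" and bM: "\<forall>x\<in>M. b x \<in> M"
    and bperp: "\<forall>y\<in>K. (\<forall>m\<in>M. cinner m y = 0) \<longrightarrow> (\<forall>m\<in>M. cinner m (b y) = 0)"
  shows "q \<circ> b = b \<circ> q"
proof
  fix x
  show "(q \<circ> b) x = (b \<circ> q) x"
  proof (cases "x \<in> K")
    case True
    have qx: "q x \<in> K" using q_inK True .
    have d: "x - q x \<in> K" using cs_diff[OF csK True qx] .
    have "b x - b (q x) = b (x - q x)" using bop_diff[OF b csK True qx] by simp
    moreover have "\<forall>m\<in>M. cinner m (b (x - q x)) = 0"
      using bperp d q_perp[OF True] by blast
    ultimately have "q (b x) = b (q x)"
      using q_char[OF bop_maps[OF b True] bM[rule_format, OF q_in[OF True]]] by simp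
    thus ?thesis by simp
  next
    case False
    thus ?thesis using bop_out[OF b False] q_out[OF False] q_zero bop_zero[OF b csK] by simp
  qed
qed

end


lemma comm_iff: "b \<in> op_commutant S M \<longleftrightarrow> bop S b \<and> (\<forall>a\<in>M. b \<circ> a = a \<circ> b)"
  by (simp add: op_commutant_def)

lemma comm_antitone: "Y \<subseteq> Z \<Longrightarrow> op_commutant S Z \<subseteq> op_commutant S Y"
  unfolding op_commutant_def by blast

lemma comm_Un: "op_commutant S (Y \<union> Z) = op_commutant S Y \<inter> op_commutant S Z"
  unfolding op_commutant_def by blast

lemma comm_bop: "b \<in> op_commutant S M \<Longrightarrow> bop S b"
  by (simp add: op_commutant_def)

lemma double_sup: "(\<forall>y\<in>Y. bop S y) \<Longrightarrow> Y \<subseteq> op_commutant S (op_commutant S Y)"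
  unfolding op_commutant_def by auto

lemma triple: assumes "\<forall>y\<in>Y. bop S y"
  shows "op_commutant S (op_commutant S (op_commutant S Y)) = op_commutant S Y"
proof
  show "op_commutant S (op_commutant S (op_commutant S Y)) \<subseteq> op_commutant S Y"
    using comm_antitone[OF double_sup[OF assms]] .
  show "op_commutant S Y \<subseteq> op_commutant S (op_commutant S (op_commutant S Y))"
    by (rule double_sup) (auto simp: op_commutant_def)
qed

lemma vN_bop: "vN_algebra S M \<Longrightarrow> a \<in> M \<Longrightarrow> bop S a"
  by (simp add: vN_algebra_def)

lemma vN_mem: assumes "vN_algebra S M" "bop S b" "\<forall>c\<in>op_commutant S M. b \<circ> c = c \<circ> b"
  shows "b \<in> M"
proof -
  have "b \<in> op_commutant S (op_commutant S M)" using assms(2,3) by (simp add: op_commutant_def)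
  thus ?thesis using assms(1) by (simp add: vN_algebra_def)
qed

lemma vN_comm_mem: "vN_algebra S M \<Longrightarrow> a \<in> M \<Longrightarrow> c \<in> op_commutant S M \<Longrightarrow> c \<circ> a = a \<circ> c"
  by (simp add: op_commutant_def)

lemma vN_comp: assumes "vN_algebra S M" "closed_subspace S" "a \<in> M" "b \<in> M" shows "a \<circ> b \<in> M"
proof (rule vN_mem[OF assms(1)])
  show "bop S (a \<circ> b)" using bop_comp vN_bop assms by blast
  show "\<forall>c\<in>op_commutant S M. a \<circ> b \<circ> c = c \<circ> (a \<circ> b)"
  proof
    fix c assume c: "c \<in> op_commutant S M"
    have "c \<circ> a = a \<circ> c" "c \<circ> b = b \<circ> c" using vN_comm_mem[OF assms(1) _ c] assms(3,4) by auto
    thus "a \<circ> b \<circ> c = c \<circ> (a \<circ> b)" by (metis comp_assoc)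
  qed
qed

lemma idop_bop: assumes "closed_subspace S" shows "bop S (idop S)"
  unfolding bop_def idop_def using cs_add[OF assms] cs_smul[OF assms] by (auto intro!: exI[of _ "1::real"])

lemma idop_comm: assumes "closed_subspace S" "bop S c" shows "idop S \<circ> c = c \<circ> idop S"
proof
  fix x show "(idop S \<circ> c) x = (c \<circ> idop S) x"
    using assms bop_maps[OF assms(2)] bop_out[OF assms(2)] bop_zero[OF assms(2,1)] cs_zero[OF assms(1)]
    by (auto simp: idop_def)
qed

lemma vN_idop: assumes "vN_algebra S M" "closed_subspace S" shows "idop S \<in> M"
  using vN_mem[OF assms(1) idop_bop[OF assms(2)]] idop_comm[OF assms(2)] comm_bop by metis

lemma adj_rev: assumes "is_adj S a b" "x \<in> S" "y \<in> S" shows "cinner (b x) y = cinner x (a y)"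
proof -
  have "cinner (a y) x = cinner y (b x)" using assms by (simp add: is_adj_def)
  hence "cnj (cinner (a y) x) = cnj (cinner y (b x))" by simp
  thus ?thesis by (simp add: cinner_commute[of x "a y"] cinner_commute[of "b x" y])
qed

lemma adj_fwd: "is_adj S a b \<Longrightarrow> x \<in> S \<Longrightarrow> y \<in> S \<Longrightarrow> cinner (a x) y = cinner x (b y)"
  by (simp add: is_adj_def)

lemma inner_ext: assumes "closed_subspace S" "u \<in> S" "v \<in> S" "\<forall>w\<in>S. cinner w u = cinner w v"
  shows "u = v"
proof -
  have "u - v \<in> S" using cs_diff[OF assms(1-3)] .
  hence "cinner (u - v) u = cinner (u - v) v" using assms(4) by blast
  thus ?thesis using cinner_eq_imp_eq cs_mem_ell2[OF assms(1)] assms(2,3) by blast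
qed

lemma adj_commute:
  assumes S: "closed_subspace S" and ab: "is_adj S a b" and qq: "is_adj S q q"
    and aq: "a \<circ> q = q \<circ> a"
  shows "b \<circ> q = q \<circ> b"
proof
  fix x
  have a: "bop S a" and b: "bop S b" and q: "bop S q" using ab qq by (auto simp: is_adj_def)
  show "(b \<circ> q) x = (q \<circ> b) x"
  proof (cases "x \<in> S")
    case True
    have qx: "q x \<in> S" "b x \<in> S" using bop_maps q b True by auto
    have "b (q x) = q (b x)"
    proof (rule inner_ext[OF S bop_maps[OF b qx(1)] bop_maps[OF q qx(2)]], rule ballI)
      fix w assume w: "w \<in> S"
      have aw: "a w \<in> S" "q w \<in> S" using bop_maps a q w by auto
      have "cinner w (b (q x)) = cinner (a w) (q x)" using adj_fwd[OF ab w qx(1)] by simp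
      also have "\<dots> = cinner (q (a w)) x" using adj_fwd[OF qq aw(1) True] by simp
      also have "q (a w) = a (q w)" using aq by (metis comp_apply)
      also have "cinner (a (q w)) x = cinner (q w) (b x)" using adj_fwd[OF ab aw(2) True] .
      also have "\<dots> = cinner w (q (b x))" using adj_fwd[OF qq w qx(2)] .
      finally show "cinner w (b (q x)) = cinner w (q (b x))" .
    qed
    thus ?thesis by simp
  next
    case False
    thus ?thesis using bop_out[OF b False] bop_out[OF q False] bop_zero[OF b S] bop_zero[OF q S] by simp
  qed
qed

lemma prodops_Nil: "prodops [] = id"
  by (simp add: prodops_def)
lemma prodops_Cons: "prodops (f # fs) = f \<circ> prodops fs"
  by (simp add: prodops_def)

lemma lin_span_mono: "Y \<subseteq> Z \<Longrightarrow> lin_span Y \<subseteq> lin_span Z"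
  unfolding lin_span_def by blast

lemma perp_K0: assumes "X \<subseteq> ell2" "y \<in> ell2" "\<forall>x\<in>X. cinner x y = 0"
  shows "\<forall>m\<in>l2closure (lin_span X). cinner m y = 0"
  using perp_l2closure[OF lin_span_ell2[OF assms(1)] assms(2)] perp_lin_span[OF assms] by blast

lemma X_sub_K0: "X \<subseteq> ell2 \<Longrightarrow> X \<subseteq> l2closure (lin_span X)"
  using l2closure_sup[OF lin_span_ell2] lin_span_base by blast

lemma transfer_inv:
  assumes S: "closed_subspace S" and XS: "X \<subseteq> S" and b: "bop S b" and bX: "\<forall>x\<in>X. b x \<in> X"
  shows "\<forall>x\<in>l2closure (lin_span X). b x \<in> l2closure (lin_span X)"
proof -
  have LS: "lin_span X \<subseteq> S" using lin_span_sub[OF S XS] .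
  have bXX: "b ` X \<subseteq> X" using bX by blast
  have 1: "b ` l2closure (lin_span X) \<subseteq> l2closure (b ` lin_span X)" using bop_l2closure[OF b S LS] .
  have 2: "l2closure (b ` lin_span X) \<subseteq> l2closure (lin_span (b ` X))"
    using l2closure_mono[OF bop_lin_span[OF b S XS]] .
  have 3: "l2closure (lin_span (b ` X)) \<subseteq> l2closure (lin_span X)"
    using l2closure_mono[OF lin_span_mono[OF bXX]] .
  show ?thesis using 1 2 3 by blast
qed

lemma transfer_perp:
  assumes S: "closed_subspace S" and XS: "X \<subseteq> S" and b: "bop S b"
    and bP: "\<forall>y\<in>S. (\<forall>x\<in>X. cinner x y = 0) \<longrightarrow> (\<forall>x\<in>X. cinner x (b y) = 0)"
  shows "\<forall>y\<in>S. (\<forall>m\<in>l2closure (lin_span X). cinner m y = 0) \<longrightarrow>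
            (\<forall>m\<in>l2closure (lin_span X). cinner m (b y) = 0)"
proof (rule ballI, rule impI)
  fix y assume y: "y \<in> S" and p: "\<forall>m\<in>l2closure (lin_span X). cinner m y = 0"
  have XL: "X \<subseteq> ell2" using XS cs_ell2[OF S] by blast
  have "\<forall>x\<in>X. cinner x y = 0" using p X_sub_K0[OF XL] by blast
  hence "\<forall>x\<in>X. cinner x (b y) = 0" using bP y by blast
  moreover have "b y \<in> ell2" using bop_maps[OF b y] cs_ell2[OF S] by blast
  ultimately show "\<forall>m\<in>l2closure (lin_span X). cinner m (b y) = 0" using perp_K0[OF XL] by blast
qed


locale dil =
  fixes H K :: "'i vec set" and A B :: "'i op set"
    and T \<theta> :: "'s::comm_monoid_add \<Rightarrow> 'i op \<Rightarrow> 'i op" and p :: "'i op"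
  assumes cH: "closed_subspace H" and vA: "vN_algebra H A" and cpT: "cp_semigroup H A T"
    and dl: "dilation H A T p K B \<theta>"
begin

lemma cK: "closed_subspace K" using dl by (simp add: dilation_def)
lemma HK: "H \<subseteq> K" using dl by (simp add: dilation_def)
lemma vB: "vN_algebra K B" using dl by (simp add: dilation_def)
lemma pB: "p \<in> B" using dl by (simp add: dilation_def)
lemma pproj: "is_projection K p" using dl by (simp add: dilation_def)
lemma pK: "p ` K = H" using dl by (simp add: dilation_def)
lemma Aeq: "A = compr H p ` B" using dl by (simp add: dilation_def)
lemma e\<theta>: "e_semigroup K B \<theta>" using dl by (simp add: dilation_def)

lemma pbop: "bop K p" using pproj by (simp add: is_projection_def)
lemma pp: "p \<circ> p = p" using pproj by (simp add: is_projection_def)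
lemma padj: "is_adj K p p" using pproj by (simp add: is_projection_def)
lemma ppx: "p (p x) = p x" using pp by (metis comp_apply)

lemma pH: "h \<in> H \<Longrightarrow> p h = h"
  using pK ppx by auto

lemma pKH: "x \<in> K \<Longrightarrow> p x \<in> H" using pK by blast

lemma \<theta>B: "a \<in> B \<Longrightarrow> \<theta> s a \<in> B"
  using e\<theta> by (simp add: e_semigroup_def cp_semigroup_def ncp_map_def)
lemma \<theta>0: "a \<in> B \<Longrightarrow> \<theta> 0 a = a"
  using e\<theta> by (simp add: e_semigroup_def cp_semigroup_def)
lemma \<theta>adj: "a \<in> B \<Longrightarrow> is_adj K a b \<Longrightarrow> is_adj K (\<theta> s a) (\<theta> s b)"
  using e\<theta> by (simp add: e_semigroup_def)

lemma Bbop: "a \<in> B \<Longrightarrow> bop K a" using vN_bop[OF vB] .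

lemma extB: assumes "a \<in> A" shows "ext_op p a \<in> B"
proof -
  obtain b where b: "b \<in> B" "a = compr H p b" using assms Aeq by blast
  have bb: "bop K b" using Bbop b by blast
  have "ext_op p a = p \<circ> (b \<circ> p)"
  proof
    fix x show "ext_op p a x = (p \<circ> (b \<circ> p)) x"
    proof (cases "x \<in> K")
      case True
      thus ?thesis using pKH[OF True] by (simp add: b ext_op_def compr_def restr_op_def ppx)
    next
      case False
      have p0: "p x = 0" using bop_out[OF pbop False] .
      have "p 0 = 0" "b 0 = 0" using bop_zero[OF pbop cK] bop_zero[OF bb cK] by auto
      thus ?thesis using p0 cs_zero[OF cH] by (simp add: b ext_op_def compr_def restr_op_def)
    qed
  qed
  thus ?thesis using vN_comp[OF vB cK pB vN_comp[OF vB cK b(1) pB]] by simp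
qed

abbreviation F where "F \<equiv> (\<lambda>(s, a). \<theta> s (ext_op p a))"

lemma FB: "x \<in> UNIV \<times> A \<Longrightarrow> F x \<in> B"
  using \<theta>B extB by auto

lemma QpB: "set xs \<subseteq> UNIV \<times> A \<Longrightarrow> prodops (map F xs) \<circ> p \<in> B"
proof (induction xs)
  case Nil thus ?case using pB by (simp add: prodops_Nil)
next
  case (Cons x xs)
  have eq: "prodops (map F (x # xs)) \<circ> p = F x \<circ> (prodops (map F xs) \<circ> p)"
    by (simp only: list.map prodops_Cons comp_assoc)
  have "x \<in> UNIV \<times> A" "set xs \<subseteq> UNIV \<times> A" using Cons.prems by auto
  hence "F x \<circ> (prodops (map F xs) \<circ> p) \<in> B" using vN_comp[OF vB cK FB Cons.IH] by blast
  thus ?case by (simp only: eq)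
qed

lemma Qp_eq: "h \<in> H \<Longrightarrow> prodops (map F xs) h = (prodops (map F xs) \<circ> p) h"
  using pH by simp

abbreviation X where "X \<equiv> {prodops (map (\<lambda>(s, a). \<theta> s (ext_op p a)) xs) h | xs h.
                             xs \<noteq> [] \<and> set xs \<subseteq> UNIV \<times> A \<and> h \<in> H}"

lemma XK: "X \<subseteq> K"
proof
  fix x assume "x \<in> X"
  then obtain xs h where x: "x = prodops (map F xs) h" "set xs \<subseteq> UNIV \<times> A" "h \<in> H" by blast
  have "bop K (prodops (map F xs) \<circ> p)" using Bbop QpB x(2) by blast
  hence "(prodops (map F xs) \<circ> p) h \<in> K" using bop_maps HK x(3) by blast
  thus "x \<in> K" using Qp_eq x by simp
qed

lemma XL: "X \<subseteq> ell2" using XK cs_ell2[OF cK] by blast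

lemma HX: "H \<subseteq> X"
proof
  fix h assume h: "h \<in> H"
  have iA: "idop H \<in> A" using vN_idop[OF vA cH] .
  have "prodops (map F [(0, idop H)]) h = \<theta> 0 (ext_op p (idop H)) h" by (simp add: prodops_def)
  also have "\<dots> = ext_op p (idop H) h" using \<theta>0[OF extB[OF iA]] by simp
  also have "\<dots> = h" using h pH by (simp add: ext_op_def idop_def)
  finally show "h \<in> X" using iA h by (intro CollectI exI[of _ "[(0, idop H)]"] exI[of _ h]) auto
qed

lemma GX: assumes "a \<in> A" "x \<in> X" shows "\<theta> s (ext_op p a) x \<in> X"
proof -
  obtain xs h where x: "x = prodops (map F xs) h" "xs \<noteq> []" "set xs \<subseteq> UNIV \<times> A" "h \<in> H"
    using assms(2) by blast
  have eq: "\<theta> s (ext_op p a) x = prodops (map F ((s, a) # xs)) h" by (simp add: x prodops_Cons)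
  have "(s,a)#xs \<noteq> [] \<and> set ((s,a)#xs) \<subseteq> UNIV \<times> A \<and> h \<in> H" using x assms(1) by auto
  thus ?thesis using eq by blast
qed

lemma Gadj: assumes "a \<in> A" shows "\<exists>a'\<in>A. is_adj K (\<theta> s (ext_op p a)) (\<theta> s (ext_op p a'))"
proof -
  obtain a' where a': "a' \<in> A" "is_adj H a a'" using vA assms by (auto simp: vN_algebra_def)
  have ab: "bop H a" "bop H a'" using a' by (auto simp: is_adj_def)
  have "is_adj K (ext_op p a) (ext_op p a')"
    unfolding is_adj_def
  proof (intro conjI ballI)
    show "bop K (ext_op p a)" "bop K (ext_op p a')" using Bbop extB assms a' by auto
    fix x y assume x: "x \<in> K" and y: "y \<in> K"
    have px: "p x \<in> H" "p y \<in> H" using pKH x y by auto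
    have u: "a (p x) \<in> H" "a' (p y) \<in> H" using bop_maps ab px by auto
    have uK: "a (p x) \<in> K" "a' (p y) \<in> K" using u HK by auto
    have "cinner (ext_op p a x) y = cinner (p (a (p x))) y" using pH[OF u(1)] by (simp add: ext_op_def)
    also have "\<dots> = cinner (a (p x)) (p y)" using adj_fwd[OF padj uK(1) y] .
    also have "\<dots> = cinner (p x) (a' (p y))" using adj_fwd[OF a'(2) px] .
    also have "\<dots> = cinner x (p (a' (p y)))" using adj_fwd[OF padj x uK(2)] .
    also have "\<dots> = cinner x (ext_op p a' y)" using pH[OF u(2)] by (simp add: ext_op_def)
    finally show "cinner (ext_op p a x) y = cinner x (ext_op p a' y)" .
  qed
  thus ?thesis using \<theta>adj extB assms a' by blast
qed

lemma Comm: assumes c: "c \<in> op_commutant K B" shows "set xs \<subseteq> UNIV \<times> A \<Longrightarrow>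
   c (prodops (map F xs) h) = prodops (map F xs) (c h)"
proof (induction xs)
  case Nil thus ?case by (simp add: prodops_Nil)
next
  case (Cons x xs)
  have "c \<circ> F x = F x \<circ> c" using vN_comm_mem[OF vB FB c] Cons.prems by simp
  hence "c (F x y) = F x (c y)" for y by (metis comp_apply)
  thus ?case using Cons by (simp add: prodops_Cons)
qed

lemma cH': assumes c: "c \<in> op_commutant K B" and h: "h \<in> H" shows "c h \<in> H"
proof -
  have "c \<circ> p = p \<circ> c" using vN_comm_mem[OF vB pB c] .
  hence "c h = p (c h)" using pH[OF h] by (metis comp_apply)
  moreover have "c h \<in> K" using bop_maps[OF comm_bop[OF c]] h HK by blast
  ultimately show ?thesis using pKH by metis
qed

lemma CX: assumes c: "c \<in> op_commutant K B" and x: "x \<in> X" shows "c x \<in> X"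
proof -
  obtain xs h where x: "x = prodops (map F xs) h" "xs \<noteq> []" "set xs \<subseteq> UNIV \<times> A" "h \<in> H"
    using x by blast
  have "c x = prodops (map F xs) (c h)" using Comm[OF c x(3)] x(1) by simp
  thus ?thesis using x cH'[OF c x(4)] by blast
qed

lemma Cperp: assumes c: "c \<in> op_commutant K B" and y: "y \<in> K" and yp: "\<forall>x\<in>X. cinner x y = 0"
  shows "\<forall>x\<in>X. cinner x (c y) = 0"
proof
  fix x assume "x \<in> X"
  then obtain xs h where x: "x = prodops (map F xs) h" "xs \<noteq> []" "set xs \<subseteq> UNIV \<times> A" "h \<in> H"
    by blast
  define d where "d = prodops (map F xs) \<circ> p"
  have dB: "d \<in> B" using QpB x(3) by (simp add: d_def)
  obtain d' where d': "d' \<in> B" "is_adj K d d'" using vB dB by (auto simp: vN_algebra_def)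
  have hK: "h \<in> K" using x(4) HK by blast
  have cb: "bop K c" using comm_bop[OF c] .
  have d'b: "bop K d'" using Bbop d' by blast
  have cyK: "c y \<in> K" using bop_maps[OF cb y] .
  have d'y: "d' y = 0"
  proof (rule inner_ext[OF cK bop_maps[OF d'b y] cs_zero[OF cK]], rule ballI)
    fix w assume w: "w \<in> K"
    have "cinner w (d' y) = cinner (d w) y" using adj_fwd[OF d'(2) w y] by simp
    also have "d w = prodops (map F xs) (p w)" by (simp add: d_def)
    also have "cinner (prodops (map F xs) (p w)) y = 0" using yp x pKH[OF w] by blast
    finally show "cinner w (d' y) = cinner w 0" by simp
  qed
  have "cinner x (c y) = cinner (d h) (c y)" using x(1) pH[OF x(4)] by (simp add: d_def)
  also have "\<dots> = cinner h (d' (c y))" using adj_fwd[OF d'(2) hK cyK] .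
  also have "d' (c y) = c (d' y)" using vN_comm_mem[OF vB d'(1) c] by (metis comp_apply)
  also have "cinner h (c (d' y)) = 0" unfolding d'y bop_zero[OF cb cK] by (rule cinner_zero_right)
  finally show "cinner x (c y) = 0" .
qed

lemma Gperp: assumes a: "a \<in> A" and y: "y \<in> K" and yp: "\<forall>x\<in>X. cinner x y = 0"
  shows "\<forall>x\<in>X. cinner x (\<theta> s (ext_op p a) y) = 0"
proof
  fix x assume x: "x \<in> X"
  obtain a' where a': "a' \<in> A" "is_adj K (\<theta> s (ext_op p a)) (\<theta> s (ext_op p a'))" using Gadj[OF a] by blast
  have xK: "x \<in> K" using x XK by blast
  have "cinner x (\<theta> s (ext_op p a) y) = cinner (\<theta> s (ext_op p a') x) y"
    using adj_rev[OF a'(2) xK y] by simp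
  also have "\<dots> = 0" using yp GX[OF a'(1) x] by blast
  finally show "cinner x (\<theta> s (ext_op p a) y) = 0" .
qed

abbreviation K0 where "K0 \<equiv> l2closure (lin_span X)"

lemma csK0: "closed_subspace K0" using cs_closure_span[OF XL] .
lemma K0K: "K0 \<subseteq> K" using l2closure_sub[OF cK lin_span_sub[OF cK XK]] .
lemma XK0: "X \<subseteq> K0" using X_sub_K0[OF XL] .

abbreviation G where "G \<equiv> (\<Union>s. \<theta> s ` ext_op p ` A)"

lemma GB: "G \<subseteq> B" using \<theta>B extB by blast

lemma forward:
  assumes Bgen: "B = gen_vN K G" and cc: "central_carrier K B p (idop K)"
  shows "K = K0"
proof -
  interpret P: projsetup K K0 using cK csK0 K0K by unfold_locales
  let ?q = "projto K K0"
  have qcomm: "?q \<circ> b = b \<circ> ?q" if b: "bop K b" and bX: "\<forall>x\<in>X. b x \<in> X"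
    and bP: "\<forall>y\<in>K. (\<forall>x\<in>X. cinner x y = 0) \<longrightarrow> (\<forall>x\<in>X. cinner x (b y) = 0)" for b
    using P.q_commute[OF b transfer_inv[OF cK XK b bX] transfer_perp[OF cK XK b bP]] .
  define M where "M = B \<inter> op_commutant K {?q}"
  have Meq: "M = op_commutant K (op_commutant K B \<union> {?q})"
    using vB unfolding M_def comm_Un vN_algebra_def by auto
  have vM: "vN_algebra K M"
    unfolding vN_algebra_def
  proof (intro conjI ballI)
    fix a assume a: "a \<in> M"
    show "bop K a" using a Bbop by (auto simp: M_def)
    obtain b where b: "b \<in> B" "is_adj K a b" using a vB by (auto simp: M_def vN_algebra_def)
    have aq: "a \<circ> ?q = ?q \<circ> a" using a by (auto simp: M_def op_commutant_def)
    have "b \<circ> ?q = ?q \<circ> b" using adj_commute[OF cK b(2) P.q_selfadj aq] .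
    hence "b \<in> M" using b Bbop by (auto simp: M_def op_commutant_def)
    thus "\<exists>b\<in>M. is_adj K a b" using b by blast
  next
    show "op_commutant K (op_commutant K M) = M"
      unfolding Meq by (rule triple) (auto simp: op_commutant_def P.q_bop)
  qed
  have GM: "G \<subseteq> M"
  proof
    fix g assume "g \<in> G"
    then obtain s a where g: "g = \<theta> s (ext_op p a)" "a \<in> A" by blast
    have gB: "g \<in> B" using g \<theta>B extB by blast
    have "?q \<circ> g = g \<circ> ?q"
      using qcomm[OF Bbop[OF gB]] GX[OF g(2)] Gperp[OF g(2)] g(1) by blast
    thus "g \<in> M" using gB Bbop by (auto simp: M_def op_commutant_def)
  qed
  have BM: "B \<subseteq> M" using vM GM Bgen unfolding gen_vN_def by blast
  have qB': "?q \<in> op_commutant K B"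
    using BM P.q_bop by (auto simp: M_def op_commutant_def)
  have qB: "?q \<in> B"
  proof (rule vN_mem[OF vB P.q_bop], rule ballI)
    fix c assume c: "c \<in> op_commutant K B"
    show "?q \<circ> c = c \<circ> ?q"
      using qcomm[OF comm_bop[OF c]] CX[OF c] Cperp[OF c] by blast
  qed
  have qp: "?q \<circ> p = p"
  proof
    fix x show "(?q \<circ> p) x = p x"
    proof (cases "x \<in> K")
      case True
      have "p x \<in> K0" using pKH[OF True] HX XK0 by blast
      thus ?thesis using P.q_fix by simp
    next
      case False
      thus ?thesis using bop_out[OF pbop False] P.q_zero by simp
    qed
  qed
  have ccu: "\<forall>q'. q' \<in> B \<inter> op_commutant K B \<and> is_projection K q' \<and> q' \<circ> p = p \<longrightarrow> q' \<circ> idop K = idop K"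
    using cc by (simp add: central_carrier_def)
  have "?q \<in> B \<inter> op_commutant K B \<and> is_projection K ?q \<and> ?q \<circ> p = p"
    using qB qB' P.q_projection qp by simp
  hence qid: "?q \<circ> idop K = idop K" using ccu by blast
  have "K \<subseteq> K0"
  proof
    fix x assume x: "x \<in> K"
    have "(?q \<circ> idop K) x = idop K x" using qid by simp
    hence "?q x = x" using x by (simp add: idop_def)
    thus "x \<in> K0" using P.q_in[OF x] by simp
  qed
  thus ?thesis using K0K by blast
qed

lemma backward:
  assumes KK0: "K = K0"
  shows "central_carrier K B p (idop K)"
proof -
  have idB: "idop K \<in> B" using vN_idop[OF vB cK] .
  have idb: "bop K (idop K)" using idop_bop[OF cK] .
  have idB': "idop K \<in> op_commutant K B"
    using idb idop_comm[OF cK] Bbop by (auto simp: op_commutant_def)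
  have idproj: "is_projection K (idop K)"
    unfolding is_projection_def is_adj_def using idb by (auto simp: idop_def fun_eq_iff)
  have idp: "idop K \<circ> p = p"
  proof
    fix x show "(idop K \<circ> p) x = p x"
      using bop_maps[OF pbop] bop_out[OF pbop] cs_zero[OF cK] by (cases "x \<in> K") (auto simp: idop_def)
  qed
  have univ: "q' \<circ> idop K = idop K"
    if q': "q' \<in> B \<inter> op_commutant K B" "is_projection K q'" "q' \<circ> p = p" for q'
  proof -
    have qc: "q' \<in> op_commutant K B" using q' by blast
    have qb: "bop K q'" using q' by (auto simp: is_projection_def)
    have qpx: "q' (p x) = p x" for x using q'(3) by (metis comp_apply)
    have fixX: "q' x = x" if "x \<in> X" for x
    proof -
      obtain xs h where x: "x = prodops (map F xs) h" "set xs \<subseteq> UNIV \<times> A" "h \<in> H" using \<open>x \<in> X\<close> by blast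
      have "q' h = h" using qpx[of h] pH[OF x(3)] by simp
      thus ?thesis using Comm[OF qc x(2)] x(1) by simp
    qed
    have fixL: "q' x = x" if xl: "x \<in> lin_span X" for x
    proof -
      obtain n c v where x: "x = lsum n c v" "\<forall>k<n. v k \<in> X" using xl unfolding lin_span_lsum by blast
      have "q' x = lsum n c (\<lambda>k. q' (v k))" using bop_lsum[OF qb cK] x XK by blast
      also have "\<dots> = lsum n c v" using x fixX by (intro lsum_cong) auto
      finally show ?thesis using x by simp
    qed
    obtain C where C: "C > 0" "\<forall>x\<in>K. vnorm (q' x) \<le> C * vnorm x" using bop_bound[OF qb] by blast
    have fixK0: "q' x = x" if x: "x \<in> K0" for x
    proof -
      have xK: "x \<in> K" using x K0K by blast
      have "vnorm (q' x - x) \<le> 0 + e" if e: "e > 0" for e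
      proof -
        have "e / (C + 1) > 0" using e C by simp
        then obtain z where z: "z \<in> lin_span X" "vnorm (x - z) < e / (C + 1)" using l2closureE[OF x] by blast
        have zK: "z \<in> K" using z lin_span_sub[OF cK XK] by blast
        have L: "q' x - q' z \<in> ell2" "z - x \<in> ell2" "x - z \<in> K"
          using cs_mem_ell2[OF cK] cs_diff[OF cK] bop_maps[OF qb] xK zK by auto
        have "q' x - x = (q' x - q' z) + (z - x)" using fixL[OF z(1)] by simp
        hence t1: "vnorm (q' x - x) \<le> vnorm (q' x - q' z) + vnorm (z - x)"
          using vnorm_triangle[OF L(1,2)] by simp
        have "q' x - q' z = q' (x - z)" using bop_diff[OF qb cK xK zK] by simp
        hence t2: "vnorm (q' x - q' z) \<le> C * vnorm (x - z)" using C L(3) by simp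
        have t3: "vnorm (z - x) = vnorm (x - z)" by (rule vnorm_minus_commute)
        have "vnorm (q' x - x) \<le> C * vnorm (x - z) + vnorm (x - z)" using t1 t2 t3 by linarith
        hence "vnorm (q' x - x) \<le> (C + 1) * vnorm (x - z)" by (simp only: distrib_right mult_1_left)
        also have "\<dots> \<le> (C + 1) * (e / (C + 1))" using z C by (intro mult_left_mono) auto
        also have "\<dots> = e" using C by simp
        finally show ?thesis by simp
      qed
      hence "vnorm (q' x - x) \<le> 0" by (rule field_le_epsilon)
      hence "vnorm (q' x - x) = 0" using vnorm_ge0 by (meson antisym)
      moreover have "q' x - x \<in> ell2" using cs_mem_ell2[OF cK] cs_diff[OF cK] bop_maps[OF qb] xK by auto
      ultimately have "q' x - x = 0" using vnorm_eq0 by blast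
      thus ?thesis by simp
    qed
    show ?thesis
    proof
      fix y show "(q' \<circ> idop K) y = idop K y"
        using fixK0 KK0 bop_zero[OF qb cK] by (cases "y \<in> K") (auto simp: idop_def)
    qed
  qed
  show ?thesis unfolding central_carrier_def using idB idB' idproj idp univ by blast
qed

end

theorem lemma2p3:
  fixes H K :: "'i vec set"
    and A B :: "'i op set"
    and T \<theta> :: "'s::comm_monoid_add \<Rightarrow> 'i op \<Rightarrow> 'i op"
    and p :: "'i op"
  assumes "closed_subspace H"
    and "vN_algebra H A"
    and "cp_semigroup H A T"
    and "dilation H A T p K B \<theta>"
  shows "minimal_dilation H A p K B \<theta> \<longleftrightarrow>
    (B = gen_vN K (\<Union>s. \<theta> s ` ext_op p ` A) \<and>
     K = l2closure (lin_span {prodops (map (\<lambda>(s, a). \<theta> s (ext_op p a)) xs) h | xs h.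
                             xs \<noteq> [] \<and> set xs \<subseteq> UNIV \<times> A \<and> h \<in> H}))"
proof -
  interpret D: dil H K A B T \<theta> p using assms by unfold_locales
  show ?thesis unfolding minimal_dilation_def using D.forward D.backward by blast
qed


end
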